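(* Let $\mathcal{C}$ be a d-category and $f:Y\to X$ a map of $\mathcal{C}$-presheaves. The following are equivalent: (1) $f$ is future open; (2) for every path $\alpha:\mathcal I\to\mathsf{E}X$ and every element $y$ of $Y$ with $\mathsf{E}(f)(y)=\alpha(\bot_{\mathcal I})$ there is a path $\beta:\mathcal I\to\mathsf{E}Y$ with $\beta(\bot_{\mathcal I})=y$ and $\mathsf{E}(f)\circ\beta=\alpha$; (3) for every track object $\Gamma$, every presheaf map $\boldsymbol\alpha:\Gamma\to X$ and every $y\in Y[\mathrm{src}\Gamma]$ with $f(y)=\boldsymbol\alpha(\bot_\Gamma)$ there is a presheaf map $\boldsymbol\beta:\Gamma\to Y$ with $\boldsymbol\beta(\bot_\Gamma)=y$ and $f\circ\boldsymbol\beta=\boldsymbol\alpha$; (4) for all track objects $\Gamma,\Delta$ with $\mathrm{tgt}\Gamma=\mathrm{src}\Delta$, letting $j:\Gamma\to\Gamma*\Delta$ be the canonical map, for all presheaf maps $\boldsymbol\gamma:\Gamma\to Y$ and $\boldsymbol\alpha:\Gamma*\Delta\to X$ with $\boldsymbol\alpha\circ j=f\circ\boldsymbol\gamma$ there is $\boldsymbol\beta:\Gamma*\Delta\to Y$ with $\boldsymbol\beta\circ j=\boldsymbol\gamma$ and $f\circ\boldsymbol\beta=\boldsymbol\alpha$.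
   Context: A d-category is a small category $\mathcal{C}$ with wide subcategories $\mathcal{C}^+$ (formorphisms) and $\mathcal{C}^-$ (backmorphisms) such that an invertible $\varphi$ is in $\mathcal{C}^+$ iff $\varphi^{-1}\in\mathcal{C}^-$; d-functors preserve both. A $\mathcal{C}$-presheaf is a functor $X:\mathcal{C}^{op}\to\mathbf{Set}$; $\mathsf{E}X$ is its category of elements (objects $(U,x)$, $x\in X[U]$; morphisms $(V,y)\to(U,x)$ the $\varphi:V\to U$ with $X[\varphi](x)=y$), a d-category where a morphism is a for-/backmorphism iff its image in $\mathcal{C}$ is; $\mathsf{E}(f)(U,y)=(U,f(y))$. A map $f:Y\to X$ is future open if for every $\varphi\in\mathcal{C}^+(V,U)$, $y\in Y[V]$, $x\in X[U]$ with $X[\varphi](x)=f(y)$ there is $\bar y\in Y[U]$ with $Y[\varphi](\bar y)=y$ and $f(\bar y)=x$. A linear category is a bipointed d-category isomorphic to a finite (possibly empty) concatenation (gluing $\top$ to $\bot$) of $\mathbf S$ (formorphism $\bot\to\top$), $\mathbf T$ (backmorphism $\top\to\bot$), $\mathbf I$ (inverse pair); a path in a d-category $\mathcal D$ is a d-functor from a linear category to $\mathcal D$. The track object of a path $\omega:\mathcal I\to\mathcal{C}$ is $\operatorname{colim}_i\mathcal{C}(-,\omega(i))$ with single start element $\bot$ the image of $\mathrm{id}_{\omega(\bot)}$ (over $\mathrm{src}=\omega(\bot)$) and single accept element $\top$ the image of $\mathrm{id}_{\omega(\top)}$ (over $\mathrm{tgt}=\omega(\top)$); a track object is such an object up to isomorphism.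 For track objects with $\mathrm{tgt}\Gamma=\mathrm{src}\Delta=U$, $\Gamma*\Delta$ is the pushout of $\Gamma\xleftarrow{\top_\Gamma}\mathcal{C}(-,U)\xrightarrow{\bot_\Delta}\Delta$ (elements viewed as maps from representables via Yoneda), with start element from $\Gamma$ and accept from $\Delta$. *)

theory Defs
  imports Main
begin

text \<open>A small category: object set, morphism set, domain, codomain, identities and
  composition (Cmp C g f is g after f).\<close>
record ('o, 'm) cat =
  Ob  :: "'o set"
  Mor :: "'m set"
  Dm  :: "'m \<Rightarrow> 'o"
  Cd  :: "'m \<Rightarrow> 'o"
  Idm :: "'o \<Rightarrow> 'm"
  Cmp :: "'m \<Rightarrow> 'm \<Rightarrow> 'm"

record ('o, 'm) dcat = "('o, 'm) cat" +
  Fwd :: "'m set"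
  Bwd :: "'m set"

definition category :: "('o, 'm, 'z) cat_scheme \<Rightarrow> bool" where
  "category C \<longleftrightarrow>
     (\<forall>U\<in>Ob C. Idm C U \<in> Mor C \<and> Dm C (Idm C U) = U \<and> Cd C (Idm C U) = U) \<and>
     (\<forall>f\<in>Mor C. Dm C f \<in> Ob C \<and> Cd C f \<in> Ob C) \<and>
     (\<forall>f\<in>Mor C. \<forall>g\<in>Mor C. Cd C f = Dm C g \<longrightarrow>
        Cmp C g f \<in> Mor C \<and> Dm C (Cmp C g f) = Dm C f \<and> Cd C (Cmp C g f) = Cd C g) \<and>
     (\<forall>f\<in>Mor C. Cmp C f (Idm C (Dm C f)) = f \<and> Cmp C (Idm C (Cd C f)) f = f) \<and>
     (\<forall>f\<in>Mor C. \<forall>g\<in>Mor C. \<forall>h\<in>Mor C. Cd C f = Dm C g \<longrightarrow> Cd C g = Dm C h \<longrightarrow>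
        Cmp C h (Cmp C g f) = Cmp C (Cmp C h g) f)"

definition inverse_pair :: "('o, 'm, 'z) cat_scheme \<Rightarrow> 'm \<Rightarrow> 'm \<Rightarrow> bool" where
  "inverse_pair C f g \<longleftrightarrow> f \<in> Mor C \<and> g \<in> Mor C \<and> Dm C g = Cd C f \<and> Cd C g = Dm C f \<and>
     Cmp C g f = Idm C (Dm C f) \<and> Cmp C f g = Idm C (Cd C f)"

definition wide_subcat :: "('o, 'm, 'z) cat_scheme \<Rightarrow> 'm set \<Rightarrow> bool" where
  "wide_subcat C M \<longleftrightarrow> M \<subseteq> Mor C \<and> (\<forall>U\<in>Ob C. Idm C U \<in> M) \<and>
     (\<forall>f\<in>M. \<forall>g\<in>M. Cd C f = Dm C g \<longrightarrow> Cmp C g f \<in> M)"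

definition dcategory :: "('o, 'm) dcat \<Rightarrow> bool" where
  "dcategory C \<longleftrightarrow> category C \<and> wide_subcat C (Fwd C) \<and> wide_subcat C (Bwd C) \<and>
     (\<forall>f g. inverse_pair C f g \<longrightarrow> (f \<in> Fwd C \<longleftrightarrow> g \<in> Bwd C))"

definition dfunctor :: "('a, 'b) dcat \<Rightarrow> ('o, 'm) dcat \<Rightarrow> ('a \<Rightarrow> 'o) \<Rightarrow> ('b \<Rightarrow> 'm) \<Rightarrow> bool" where
  "dfunctor A D Fo Fm \<longleftrightarrow>
     (\<forall>U\<in>Ob A. Fo U \<in> Ob D) \<and>
     (\<forall>f\<in>Mor A. Fm f \<in> Mor D \<and> Dm D (Fm f) = Fo (Dm A f) \<and> Cd D (Fm f) = Fo (Cd A f)) \<and>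
     (\<forall>U\<in>Ob A. Fm (Idm A U) = Idm D (Fo U)) \<and>
     (\<forall>f\<in>Mor A. \<forall>g\<in>Mor A. Cd A f = Dm A g \<longrightarrow> Fm (Cmp A g f) = Cmp D (Fm g) (Fm f)) \<and>
     (\<forall>f\<in>Fwd A. Fm f \<in> Fwd D) \<and> (\<forall>f\<in>Bwd A. Fm f \<in> Bwd D)"

datatype letter = S | T | I

text \<open>The concatenation of the letters ws (S: formorphism bot -> top, T: backmorphism
  top -> bot, I: inverse pair, both of whose arrows are for- and backmorphisms).
  Objects 0..length ws, the k-th letter glued between k and k+1, bot = 0, top = length ws.
  The glued category is thin; (i,j) is the unique morphism i -> j when it exists.\<close>
definition lin_mor :: "letter list \<Rightarrow> (nat \<times> nat) set" where
  "lin_mor ws = {(i, j). i \<le> length ws \<and> j \<le> length ws \<and>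
     (if i \<le> j then (\<forall>k. i \<le> k \<and> k < j \<longrightarrow> ws ! k \<noteq> T)
               else (\<forall>k. j \<le> k \<and> k < i \<longrightarrow> ws ! k \<noteq> S))}"

definition all_I :: "letter list \<Rightarrow> nat \<Rightarrow> nat \<Rightarrow> bool" where
  "all_I ws a b \<longleftrightarrow> (\<forall>k. a \<le> k \<and> k < b \<longrightarrow> ws ! k = I)"

definition Lin :: "letter list \<Rightarrow> (nat, nat \<times> nat) dcat" where
  "Lin ws = \<lparr> Ob = {0..length ws}, Mor = lin_mor ws, Dm = fst, Cd = snd,
      Idm = (\<lambda>i. (i, i)), Cmp = (\<lambda>g f. (fst f, snd g)),
      Fwd = {(i, j) \<in> lin_mor ws. i \<le> j \<or> all_I ws j i},
      Bwd = {(i, j) \<in> lin_mor ws. j \<le> i \<or> all_I ws i j} \<rparr>"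

definition path :: "('o, 'm) dcat \<Rightarrow> letter list \<Rightarrow> (nat \<Rightarrow> 'o) \<Rightarrow> (nat \<times> nat \<Rightarrow> 'm) \<Rightarrow> bool" where
  "path D ws Fo Fm \<longleftrightarrow> dfunctor (Lin ws) D Fo Fm"

text \<open>A C-presheaf: sets X[U] and restriction maps X[phi] : X[Cd phi] -> X[Dm phi].\<close>
record ('o, 'm, 'e) psh =
  Elt :: "'o \<Rightarrow> 'e set"
  Act :: "'m \<Rightarrow> 'e \<Rightarrow> 'e"

definition presheaf :: "('o, 'm) dcat \<Rightarrow> ('o, 'm, 'e) psh \<Rightarrow> bool" where
  "presheaf C X \<longleftrightarrow>
     (\<forall>\<phi>\<in>Mor C. \<forall>x\<in>Elt X (Cd C \<phi>). Act X \<phi> x \<in> Elt X (Dm C \<phi>)) \<and>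
     (\<forall>U\<in>Ob C. \<forall>x\<in>Elt X U. Act X (Idm C U) x = x) \<and>
     (\<forall>\<phi>\<in>Mor C. \<forall>\<psi>\<in>Mor C. Cd C \<phi> = Dm C \<psi> \<longrightarrow>
        (\<forall>x\<in>Elt X (Cd C \<psi>). Act X (Cmp C \<psi> \<phi>) x = Act X \<phi> (Act X \<psi> x)))"

definition psh_map :: "('o, 'm) dcat \<Rightarrow> ('o, 'm, 'e) psh \<Rightarrow> ('o, 'm, 'e2) psh \<Rightarrow>
    ('o \<Rightarrow> 'e \<Rightarrow> 'e2) \<Rightarrow> bool" where
  "psh_map C Y X f \<longleftrightarrow>
     (\<forall>U\<in>Ob C. \<forall>y\<in>Elt Y U. f U y \<in> Elt X U) \<and>
     (\<forall>\<phi>\<in>Mor C. \<forall>y\<in>Elt Y (Cd C \<phi>). f (Dm C \<phi>) (Act Y \<phi> y) = Act X \<phi> (f (Cd C \<phi>) y))"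

definition future_open :: "('o, 'm) dcat \<Rightarrow> ('o, 'm, 'y) psh \<Rightarrow> ('o, 'm, 'x) psh \<Rightarrow>
    ('o \<Rightarrow> 'y \<Rightarrow> 'x) \<Rightarrow> bool" where
  "future_open C Y X f \<longleftrightarrow>
     (\<forall>\<phi>\<in>Fwd C. \<forall>y\<in>Elt Y (Dm C \<phi>). \<forall>x\<in>Elt X (Cd C \<phi>).
        Act X \<phi> x = f (Dm C \<phi>) y \<longrightarrow>
        (\<exists>y'\<in>Elt Y (Cd C \<phi>). Act Y \<phi> y' = y \<and> f (Cd C \<phi>) y' = x))"

text \<open>Objects (U,x) with x in X[U]; the morphism (V, X[phi] x) -> (U, x) over phi is
  represented by the pair (phi, x).\<close>
definition elcat :: "('o, 'm) dcat \<Rightarrow> ('o, 'm, 'x) psh \<Rightarrow> ('o \<times> 'x, 'm \<times> 'x) dcat" where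
  "elcat C X = \<lparr> Ob = {(U, x). U \<in> Ob C \<and> x \<in> Elt X U},
      Mor = {(\<phi>, x). \<phi> \<in> Mor C \<and> x \<in> Elt X (Cd C \<phi>)},
      Dm = (\<lambda>(\<phi>, x). (Dm C \<phi>, Act X \<phi> x)),
      Cd = (\<lambda>(\<phi>, x). (Cd C \<phi>, x)),
      Idm = (\<lambda>(U, x). (Idm C U, x)),
      Cmp = (\<lambda>(\<psi>, x') (\<phi>, x). (Cmp C \<psi> \<phi>, x')),
      Fwd = {(\<phi>, x). \<phi> \<in> Fwd C \<and> x \<in> Elt X (Cd C \<phi>)},
      Bwd = {(\<phi>, x). \<phi> \<in> Bwd C \<and> x \<in> Elt X (Cd C \<phi>)} \<rparr>"

definition Ef_ob :: "('o \<Rightarrow> 'y \<Rightarrow> 'x) \<Rightarrow> 'o \<times> 'y \<Rightarrow> 'o \<times> 'x" where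
  "Ef_ob f = (\<lambda>(U, y). (U, f U y))"

definition Ef_mor :: "('o, 'm) dcat \<Rightarrow> ('o \<Rightarrow> 'y \<Rightarrow> 'x) \<Rightarrow> 'm \<times> 'y \<Rightarrow> 'm \<times> 'x" where
  "Ef_mor C f = (\<lambda>(\<phi>, y). (\<phi>, f (Cd C \<phi>) y))"

section \<open>Track objects: colim_i C(-, omega i)\<close>

definition track_carrier :: "('o, 'm) dcat \<Rightarrow> letter list \<Rightarrow> (nat \<Rightarrow> 'o) \<Rightarrow> 'o \<Rightarrow> (nat \<times> 'm) set" where
  "track_carrier C ws Wo U = {(i, \<psi>). i \<le> length ws \<and> \<psi> \<in> Mor C \<and> Dm C \<psi> = U \<and> Cd C \<psi> = Wo i}"

definition track_step :: "('o, 'm) dcat \<Rightarrow> letter list \<Rightarrow> (nat \<Rightarrow> 'o) \<Rightarrow> (nat \<times> nat \<Rightarrow> 'm) \<Rightarrow>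
    'o \<Rightarrow> nat \<times> 'm \<Rightarrow> nat \<times> 'm \<Rightarrow> bool" where
  "track_step C ws Wo Wm U p q \<longleftrightarrow> p \<in> track_carrier C ws Wo U \<and> q \<in> track_carrier C ws Wo U \<and>
     (\<exists>i j \<psi>. (i, j) \<in> Mor (Lin ws) \<and> p = (i, \<psi>) \<and> q = (j, Cmp C (Wm (i, j)) \<psi>))"

definition track_cls :: "('o, 'm) dcat \<Rightarrow> letter list \<Rightarrow> (nat \<Rightarrow> 'o) \<Rightarrow> (nat \<times> nat \<Rightarrow> 'm) \<Rightarrow>
    'o \<Rightarrow> nat \<times> 'm \<Rightarrow> (nat \<times> 'm) set" where
  "track_cls C ws Wo Wm U p =
     {q. (\<lambda>a b. track_step C ws Wo Wm U a b \<or> track_step C ws Wo Wm U b a)\<^sup>*\<^sup>* p q}"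

definition track :: "('o, 'm) dcat \<Rightarrow> letter list \<Rightarrow> (nat \<Rightarrow> 'o) \<Rightarrow> (nat \<times> nat \<Rightarrow> 'm) \<Rightarrow>
    ('o, 'm, (nat \<times> 'm) set) psh" where
  "track C ws Wo Wm = \<lparr> Elt = (\<lambda>U. track_cls C ws Wo Wm U ` track_carrier C ws Wo U),
      Act = (\<lambda>\<phi> c. case (SOME p. p \<in> c) of (i, \<psi>) \<Rightarrow>
                track_cls C ws Wo Wm (Dm C \<phi>) (i, Cmp C \<psi> \<phi>)) \<rparr>"

definition track_bot :: "('o, 'm) dcat \<Rightarrow> letter list \<Rightarrow> (nat \<Rightarrow> 'o) \<Rightarrow> (nat \<times> nat \<Rightarrow> 'm) \<Rightarrow> (nat \<times> 'm) set" where
  "track_bot C ws Wo Wm = track_cls C ws Wo Wm (Wo 0) (0, Idm C (Wo 0))"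

definition track_top :: "('o, 'm) dcat \<Rightarrow> letter list \<Rightarrow> (nat \<Rightarrow> 'o) \<Rightarrow> (nat \<times> nat \<Rightarrow> 'm) \<Rightarrow> (nat \<times> 'm) set" where
  "track_top C ws Wo Wm =
     track_cls C ws Wo Wm (Wo (length ws)) (length ws, Idm C (Wo (length ws)))"

section \<open>Pushout A <- C(-,W) -> B along elements a in A[W], b in B[W]\<close>

definition glue_step :: "('o, 'm) dcat \<Rightarrow> ('o, 'm, 'a) psh \<Rightarrow> ('o, 'm, 'b) psh \<Rightarrow> 'o \<Rightarrow> 'a \<Rightarrow> 'b \<Rightarrow>
    'o \<Rightarrow> 'a + 'b \<Rightarrow> 'a + 'b \<Rightarrow> bool" where
  "glue_step C A B W a b U p q \<longleftrightarrow>
     (\<exists>\<psi>\<in>Mor C. Dm C \<psi> = U \<and> Cd C \<psi> = W \<and> p = Inl (Act A \<psi> a) \<and> q = Inr (Act B \<psi> b))"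

definition glue_cls :: "('o, 'm) dcat \<Rightarrow> ('o, 'm, 'a) psh \<Rightarrow> ('o, 'm, 'b) psh \<Rightarrow> 'o \<Rightarrow> 'a \<Rightarrow> 'b \<Rightarrow>
    'o \<Rightarrow> 'a + 'b \<Rightarrow> ('a + 'b) set" where
  "glue_cls C A B W a b U p =
     {q. (\<lambda>u v. glue_step C A B W a b U u v \<or> glue_step C A B W a b U v u)\<^sup>*\<^sup>* p q}"

definition glue :: "('o, 'm) dcat \<Rightarrow> ('o, 'm, 'a) psh \<Rightarrow> ('o, 'm, 'b) psh \<Rightarrow> 'o \<Rightarrow> 'a \<Rightarrow> 'b \<Rightarrow>
    ('o, 'm, ('a + 'b) set) psh" where
  "glue C A B W a b = \<lparr> Elt = (\<lambda>U. glue_cls C A B W a b U ` (Inl ` Elt A U \<union> Inr ` Elt B U)),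
      Act = (\<lambda>\<phi> c. glue_cls C A B W a b (Dm C \<phi>) (map_sum (Act A \<phi>) (Act B \<phi>) (SOME p. p \<in> c))) \<rparr>"

text \<open>Gamma * Delta for the track objects of paths (ws1,Wo1,Wm1), (ws2,Wo2,Wm2), and the
  canonical map j : Gamma -> Gamma * Delta.\<close>
definition track_concat where
  "track_concat C ws1 Wo1 Wm1 ws2 Wo2 Wm2 =
     glue C (track C ws1 Wo1 Wm1) (track C ws2 Wo2 Wm2) (Wo1 (length ws1))
       (track_top C ws1 Wo1 Wm1) (track_bot C ws2 Wo2 Wm2)"

definition track_concat_j where
  "track_concat_j C ws1 Wo1 Wm1 ws2 Wo2 Wm2 = (\<lambda>U x.
     glue_cls C (track C ws1 Wo1 Wm1) (track C ws2 Wo2 Wm2) (Wo1 (length ws1))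
       (track_top C ws1 Wo1 Wm1) (track_bot C ws2 Wo2 Wm2) U (Inl x))"

definition path_lifting :: "('o, 'm) dcat \<Rightarrow> ('o, 'm, 'y) psh \<Rightarrow> ('o, 'm, 'x) psh \<Rightarrow>
    ('o \<Rightarrow> 'y \<Rightarrow> 'x) \<Rightarrow> bool" where
  "path_lifting C Y X f \<longleftrightarrow>
     (\<forall>ws Ao Am. path (elcat C X) ws Ao Am \<longrightarrow>
       (\<forall>y\<in>Ob (elcat C Y). Ef_ob f y = Ao 0 \<longrightarrow>
         (\<exists>Bo Bm. path (elcat C Y) ws Bo Bm \<and> Bo 0 = y \<and>
            (\<forall>i\<in>Ob (Lin ws). Ef_ob f (Bo i) = Ao i) \<and>
            (\<forall>m\<in>Mor (Lin ws). Ef_mor C f (Bm m) = Am m))))"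

definition track_lifting :: "('o, 'm) dcat \<Rightarrow> ('o, 'm, 'y) psh \<Rightarrow> ('o, 'm, 'x) psh \<Rightarrow>
    ('o \<Rightarrow> 'y \<Rightarrow> 'x) \<Rightarrow> bool" where
  "track_lifting C Y X f \<longleftrightarrow>
     (\<forall>ws Wo Wm. path C ws Wo Wm \<longrightarrow>
       (\<forall>\<alpha>. psh_map C (track C ws Wo Wm) X \<alpha> \<longrightarrow>
         (\<forall>y\<in>Elt Y (Wo 0). f (Wo 0) y = \<alpha> (Wo 0) (track_bot C ws Wo Wm) \<longrightarrow>
           (\<exists>\<beta>. psh_map C (track C ws Wo Wm) Y \<beta> \<and>
              \<beta> (Wo 0) (track_bot C ws Wo Wm) = y \<and>
              (\<forall>U\<in>Ob C. \<forall>z\<in>Elt (track C ws Wo Wm) U. f U (\<beta> U z) = \<alpha> U z)))))"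

definition track_extension :: "('o, 'm) dcat \<Rightarrow> ('o, 'm, 'y) psh \<Rightarrow> ('o, 'm, 'x) psh \<Rightarrow>
    ('o \<Rightarrow> 'y \<Rightarrow> 'x) \<Rightarrow> bool" where
  "track_extension C Y X f \<longleftrightarrow>
     (\<forall>ws1 Wo1 Wm1 ws2 Wo2 Wm2. path C ws1 Wo1 Wm1 \<longrightarrow> path C ws2 Wo2 Wm2 \<longrightarrow>
        Wo1 (length ws1) = Wo2 0 \<longrightarrow>
       (let G = track C ws1 Wo1 Wm1;
            P = track_concat C ws1 Wo1 Wm1 ws2 Wo2 Wm2;
            j = track_concat_j C ws1 Wo1 Wm1 ws2 Wo2 Wm2
        in \<forall>\<gamma> \<alpha>. psh_map C G Y \<gamma> \<longrightarrow> psh_map C P X \<alpha> \<longrightarrow>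
             (\<forall>U\<in>Ob C. \<forall>x\<in>Elt G U. \<alpha> U (j U x) = f U (\<gamma> U x)) \<longrightarrow>
             (\<exists>\<beta>. psh_map C P Y \<beta> \<and>
                (\<forall>U\<in>Ob C. \<forall>x\<in>Elt G U. \<beta> U (j U x) = \<gamma> U x) \<and>
                (\<forall>U\<in>Ob C. \<forall>z\<in>Elt P U. f U (\<beta> U z) = \<alpha> U z))))"

end

theory Submission
  imports Defs
begin


lemma sym_rtc_sym:
  "(\<lambda>a b. R a b \<or> R b a)\<^sup>*\<^sup>* p q \<Longrightarrow> (\<lambda>a b. R a b \<or> R b a)\<^sup>*\<^sup>* q p"
  by (induction rule: rtranclp_induct) (auto intro: converse_rtranclp_into_rtranclp)

lemma sym_rtc_cls:
  assumes "(\<lambda>a b. R a b \<or> R b a)\<^sup>*\<^sup>* p q"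
  shows "{r. (\<lambda>a b. R a b \<or> R b a)\<^sup>*\<^sup>* p r} = {r. (\<lambda>a b. R a b \<or> R b a)\<^sup>*\<^sup>* q r}"
  using assms sym_rtc_sym[OF assms] by (auto intro: rtranclp_trans)

lemma sym_rtc_map:
  assumes "\<And>a b. R a b \<Longrightarrow> R' (h a) (h b)"
  shows "(\<lambda>a b. R a b \<or> R b a)\<^sup>*\<^sup>* p q \<Longrightarrow> (\<lambda>a b. R' a b \<or> R' b a)\<^sup>*\<^sup>* (h p) (h q)"
  by (induction rule: rtranclp_induct) (auto intro: rtranclp.rtrancl_into_rtrancl dest: assms)

lemma sym_rtc_inv:
  assumes "\<And>a b. R a b \<Longrightarrow> g a = g b"
  shows "(\<lambda>a b. R a b \<or> R b a)\<^sup>*\<^sup>* p q \<Longrightarrow> g q = g p"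
  by (induction rule: rtranclp_induct) (auto dest: assms)

locale catl =
  fixes C :: "('o, 'm) dcat"
  assumes category: "category C"
begin

lemma id_mor[simp]: "U \<in> Ob C \<Longrightarrow> Idm C U \<in> Mor C"
  and id_dm[simp]: "U \<in> Ob C \<Longrightarrow> Dm C (Idm C U) = U"
  and id_cd[simp]: "U \<in> Ob C \<Longrightarrow> Cd C (Idm C U) = U"
  using category unfolding category_def by auto

lemma dm_ob[simp]: "f \<in> Mor C \<Longrightarrow> Dm C f \<in> Ob C"
  and cd_ob[simp]: "f \<in> Mor C \<Longrightarrow> Cd C f \<in> Ob C"
  using category unfolding category_def by auto

lemma comp_mor[simp]: "f \<in> Mor C \<Longrightarrow> g \<in> Mor C \<Longrightarrow> Cd C f = Dm C g \<Longrightarrow> Cmp C g f \<in> Mor C"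
  and comp_dm[simp]: "f \<in> Mor C \<Longrightarrow> g \<in> Mor C \<Longrightarrow> Cd C f = Dm C g \<Longrightarrow> Dm C (Cmp C g f) = Dm C f"
  and comp_cd[simp]: "f \<in> Mor C \<Longrightarrow> g \<in> Mor C \<Longrightarrow> Cd C f = Dm C g \<Longrightarrow> Cd C (Cmp C g f) = Cd C g"
  using category unfolding category_def by auto

lemma idr[simp]: "f \<in> Mor C \<Longrightarrow> Cmp C f (Idm C (Dm C f)) = f"
  and idl[simp]: "f \<in> Mor C \<Longrightarrow> Cmp C (Idm C (Cd C f)) f = f"
  using category unfolding category_def by auto

lemma assoc: "f \<in> Mor C \<Longrightarrow> g \<in> Mor C \<Longrightarrow> h \<in> Mor C \<Longrightarrow> Cd C f = Dm C g \<Longrightarrow> Cd C g = Dm C h \<Longrightarrow>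
        Cmp C h (Cmp C g f) = Cmp C (Cmp C h g) f"
  using category unfolding category_def by auto

lemma psh_act: "presheaf C X \<Longrightarrow> \<phi> \<in> Mor C \<Longrightarrow> x \<in> Elt X (Cd C \<phi>) \<Longrightarrow> Act X \<phi> x \<in> Elt X (Dm C \<phi>)"
  unfolding presheaf_def by auto
lemma psh_id: "presheaf C X \<Longrightarrow> U \<in> Ob C \<Longrightarrow> x \<in> Elt X U \<Longrightarrow> Act X (Idm C U) x = x"
  unfolding presheaf_def by auto
lemma psh_comp: "presheaf C X \<Longrightarrow> \<phi> \<in> Mor C \<Longrightarrow> \<psi> \<in> Mor C \<Longrightarrow> Cd C \<phi> = Dm C \<psi> \<Longrightarrow>
   x \<in> Elt X (Cd C \<psi>) \<Longrightarrow> Act X (Cmp C \<psi> \<phi>) x = Act X \<phi> (Act X \<psi> x)"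
  unfolding presheaf_def by auto

lemma pm_elt: "psh_map C Y X f \<Longrightarrow> U \<in> Ob C \<Longrightarrow> y \<in> Elt Y U \<Longrightarrow> f U y \<in> Elt X U"
  unfolding psh_map_def by auto
lemma pm_nat: "psh_map C Y X f \<Longrightarrow> \<phi> \<in> Mor C \<Longrightarrow> y \<in> Elt Y (Cd C \<phi>) \<Longrightarrow>
    f (Dm C \<phi>) (Act Y \<phi> y) = Act X \<phi> (f (Cd C \<phi>) y)"
  unfolding psh_map_def by auto

lemma pm_comp: "psh_map C Y X f \<Longrightarrow> psh_map C X Z g \<Longrightarrow> psh_map C Y Z (\<lambda>U y. g U (f U y))"
  unfolding psh_map_def by auto

end

lemma lin_mor_iff: "(i, j) \<in> lin_mor ws \<longleftrightarrow> i \<le> length ws \<and> j \<le> length ws \<and>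
     (if i \<le> j then (\<forall>k. i \<le> k \<and> k < j \<longrightarrow> ws ! k \<noteq> T)
               else (\<forall>k. j \<le> k \<and> k < i \<longrightarrow> ws ! k \<noteq> S))"
  unfolding lin_mor_def by auto

lemma lin_simps[simp]: "Ob (Lin ws) = {0..length ws}" "Mor (Lin ws) = lin_mor ws"
  "Dm (Lin ws) = fst" "Cd (Lin ws) = snd" "Idm (Lin ws) = (\<lambda>i. (i,i))"
  "Cmp (Lin ws) = (\<lambda>g f. (fst f, snd g))"
  "Fwd (Lin ws) = {(i, j) \<in> lin_mor ws. i \<le> j \<or> all_I ws j i}"
  "Bwd (Lin ws) = {(i, j) \<in> lin_mor ws. j \<le> i \<or> all_I ws i j}"
  unfolding Lin_def by simp_all

locale tpath = catl +
  fixes ws :: "letter list" and Wo :: "nat \<Rightarrow> 'o" and Wm :: "nat \<times> nat \<Rightarrow> 'm"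
  assumes pth: "path C ws Wo Wm"
begin

abbreviation "n \<equiv> length ws"

lemma wo_ob[simp]: "i \<le> n \<Longrightarrow> Wo i \<in> Ob C"
  using pth unfolding path_def dfunctor_def by auto

lemma wm_mor[simp]: "(i,j) \<in> lin_mor ws \<Longrightarrow> Wm (i,j) \<in> Mor C"
  and wm_dm[simp]: "(i,j) \<in> lin_mor ws \<Longrightarrow> Dm C (Wm (i,j)) = Wo i"
  and wm_cd[simp]: "(i,j) \<in> lin_mor ws \<Longrightarrow> Cd C (Wm (i,j)) = Wo j"
  using pth unfolding path_def dfunctor_def by fastforce+

lemma wm_id: "i \<le> n \<Longrightarrow> Wm (i,i) = Idm C (Wo i)"
  using pth unfolding path_def dfunctor_def by auto

lemma wm_comp: "(i,j) \<in> lin_mor ws \<Longrightarrow> (j,k) \<in> lin_mor ws \<Longrightarrow> Wm (i,k) = Cmp C (Wm (j,k)) (Wm (i,j))"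
  using pth unfolding path_def dfunctor_def by fastforce

lemma wm_fwd: "(i,j) \<in> lin_mor ws \<Longrightarrow> i \<le> j \<Longrightarrow> Wm (i,j) \<in> Fwd C"
  using pth unfolding path_def dfunctor_def by fastforce

lemma lin_refl[simp]: "i \<le> n \<Longrightarrow> (i,i) \<in> lin_mor ws"
  by (auto simp add: lin_mor_iff)

lemma lin_fst: "(i,j) \<in> lin_mor ws \<Longrightarrow> i \<le> n" and lin_snd: "(i,j) \<in> lin_mor ws \<Longrightarrow> j \<le> n"
  by (simp_all add: lin_mor_iff)

lemma lin_up: "(i,j) \<in> lin_mor ws \<Longrightarrow> i < j \<Longrightarrow> (i, Suc i) \<in> lin_mor ws \<and> (Suc i, j) \<in> lin_mor ws"
  by (auto simp add: lin_mor_iff)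

lemma lin_down: "(Suc i,j) \<in> lin_mor ws \<Longrightarrow> j \<le> i \<Longrightarrow> (Suc i, i) \<in> lin_mor ws \<and> (i, j) \<in> lin_mor ws"
  by (auto simp add: lin_mor_iff)

lemma lin_adj_up: "(k, Suc k) \<in> lin_mor ws \<longleftrightarrow> k < n \<and> ws ! k \<noteq> T"
proof -
  have "(\<forall>m. k \<le> m \<and> m < Suc k \<longrightarrow> ws ! m \<noteq> T) \<longleftrightarrow> ws ! k \<noteq> T"
    by (auto simp: less_Suc_eq_le dest: le_antisym)
  then show ?thesis by (auto simp add: lin_mor_iff Suc_le_eq)
qed

lemma lin_adj_down: "(Suc k, k) \<in> lin_mor ws \<longleftrightarrow> k < n \<and> ws ! k \<noteq> S"
proof -
  have "(\<forall>m. k \<le> m \<and> m < Suc k \<longrightarrow> ws ! m \<noteq> S) \<longleftrightarrow> ws ! k \<noteq> S"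
    by (auto simp: less_Suc_eq_le dest: le_antisym)
  then show ?thesis by (auto simp add: lin_mor_iff Suc_le_eq)
qed

definition coherent :: "('o, 'm, 'e) psh \<Rightarrow> (nat \<Rightarrow> 'e) \<Rightarrow> bool" where
  "coherent Z z \<longleftrightarrow> (\<forall>i\<le>n. z i \<in> Elt Z (Wo i)) \<and> (\<forall>i j. (i,j) \<in> lin_mor ws \<longrightarrow> Act Z (Wm (i,j)) (z j) = z i)"

lemma coherent_adj:
  assumes Z: "presheaf C Z" and el: "\<And>i. i \<le> n \<Longrightarrow> z i \<in> Elt Z (Wo i)"
    and up: "\<And>k. k < n \<Longrightarrow> ws ! k \<noteq> T \<Longrightarrow> Act Z (Wm (k, Suc k)) (z (Suc k)) = z k"
    and dn: "\<And>k. k < n \<Longrightarrow> ws ! k \<noteq> S \<Longrightarrow> Act Z (Wm (Suc k, k)) (z k) = z (Suc k)"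
  shows "coherent Z z"
proof -
  have A: "Act Z (Wm (i,j)) (z j) = z i" if "(i,j) \<in> lin_mor ws" "i \<le> j" for i j
    using that
  proof (induction "j - i" arbitrary: i)
    case 0
    then have "i = j" by simp
    then show ?case using 0 wm_id[of i] psh_id[OF Z] el lin_fst by auto
  next
    case (Suc d)
    have ij: "i < j" using Suc by simp
    from lin_up[OF Suc.prems(1) ij] have m1: "(i, Suc i) \<in> lin_mor ws" and m2: "(Suc i, j) \<in> lin_mor ws" by auto
    have IH: "Act Z (Wm (Suc i, j)) (z j) = z (Suc i)" using Suc.hyps(1)[of "Suc i"] Suc.hyps(2) m2 ij by simp
    have "Wm (i,j) = Cmp C (Wm (Suc i, j)) (Wm (i, Suc i))" using wm_comp[OF m1 m2] .
    then have "Act Z (Wm (i,j)) (z j) = Act Z (Wm (i, Suc i)) (Act Z (Wm (Suc i, j)) (z j))"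
      using psh_comp[OF Z, of "Wm (i, Suc i)" "Wm (Suc i, j)" "z j"] m1 m2 el lin_snd by auto
    also have "\<dots> = z i" using IH up m1 lin_adj_up by auto
    finally show ?case .
  qed
  have B: "Act Z (Wm (i,j)) (z j) = z i" if "(i,j) \<in> lin_mor ws" "j < i" for i j
    using that
  proof (induction "i - j" arbitrary: i)
    case 0
    then show ?case by simp
  next
    case (Suc d)
    then obtain i' where i': "i = Suc i'" by (cases i) auto
    have ji: "j \<le> i'" using Suc i' by simp
    from lin_down[of i' j] Suc.prems i' ji have m1: "(Suc i', i') \<in> lin_mor ws" and m2: "(i', j) \<in> lin_mor ws" by auto
    have IH: "Act Z (Wm (i', j)) (z j) = z i'"
    proof (cases "j = i'")
      case True then show ?thesis using A m2 by simp
    next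
      case False then show ?thesis using Suc.hyps(1)[of i'] Suc.hyps(2) i' m2 ji by simp
    qed
    have "Wm (Suc i',j) = Cmp C (Wm (i', j)) (Wm (Suc i', i'))" using wm_comp[OF m1 m2] .
    then have "Act Z (Wm (Suc i',j)) (z j) = Act Z (Wm (Suc i', i')) (Act Z (Wm (i', j)) (z j))"
      using psh_comp[OF Z, of "Wm (Suc i', i')" "Wm (i', j)" "z j"] m1 m2 el lin_snd by auto
    also have "\<dots> = z (Suc i')" using IH dn m1 lin_adj_down by auto
    finally show ?case using i' by simp
  qed
  show ?thesis unfolding coherent_def using A B el by (meson not_le)
qed

end


context tpath begin

abbreviation "car \<equiv> track_carrier C ws Wo"
abbreviation "tstep \<equiv> track_step C ws Wo Wm"
abbreviation "cls \<equiv> track_cls C ws Wo Wm"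
abbreviation "G \<equiv> track C ws Wo Wm"

lemma car_iff: "(i, \<psi>) \<in> car U \<longleftrightarrow> i \<le> n \<and> \<psi> \<in> Mor C \<and> Dm C \<psi> = U \<and> Cd C \<psi> = Wo i"
  unfolding track_carrier_def by auto

lemma tstep_iff: "tstep U p q \<longleftrightarrow> p \<in> car U \<and> q \<in> car U \<and>
     (\<exists>i j \<psi>. (i, j) \<in> lin_mor ws \<and> p = (i, \<psi>) \<and> q = (j, Cmp C (Wm (i, j)) \<psi>))"
  by (simp add: track_step_def)

lemma cls_self: "p \<in> cls U p"
  unfolding track_cls_def by simp

lemma cls_sub: "p \<in> car U \<Longrightarrow> q \<in> cls U p \<Longrightarrow> q \<in> car U"
  unfolding track_cls_def
  using sym_rtc_inv[of "tstep U" "\<lambda>x. x \<in> car U" p q] unfolding tstep_iff by blast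

lemma cls_eq: "q \<in> cls U p \<Longrightarrow> cls U q = cls U p"
  unfolding track_cls_def using sym_rtc_cls by fastforce

lemma cls_step: "tstep U p q \<Longrightarrow> cls U q = cls U p"
  by (rule cls_eq) (auto simp: track_cls_def)

lemma cls_inv:
  assumes "\<And>a b. tstep U a b \<Longrightarrow> g a = g b" and "q \<in> cls U p"
  shows "g q = g p"
  using sym_rtc_inv[of "tstep U" g p q] assms unfolding track_cls_def by blast

lemma elt_G: "Elt G U = cls U ` car U"
  unfolding track_def by simp

lemma act_G_cls:
  assumes phi: "\<phi> \<in> Mor C" and p: "(i, \<chi>) \<in> car (Cd C \<phi>)"
  shows "Act G \<phi> (cls (Cd C \<phi>) (i, \<chi>)) = cls (Dm C \<phi>) (i, Cmp C \<chi> \<phi>)"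
proof -
  define h where "h = (\<lambda>(i::nat, \<psi>). (i, Cmp C \<psi> \<phi>))"
  define p where "p = (SOME p. p \<in> cls (Cd C \<phi>) (i, \<chi>))"
  have pin: "p \<in> cls (Cd C \<phi>) (i, \<chi>)" unfolding p_def by (rule someI, rule cls_self)
  have hstep: "tstep (Dm C \<phi>) (h a) (h b)" if "tstep (Cd C \<phi>) a b" for a b
  proof -
    from that obtain i j \<psi> where ij: "(i,j) \<in> lin_mor ws" and a: "a = (i, \<psi>)"
      and b: "b = (j, Cmp C (Wm (i,j)) \<psi>)" and ac: "a \<in> car (Cd C \<phi>)" and bc: "b \<in> car (Cd C \<phi>)"
      unfolding tstep_iff by blast
    have psi: "\<psi> \<in> Mor C" "Dm C \<psi> = Cd C \<phi>" "Cd C \<psi> = Wo i" using ac a car_iff by auto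
    have "Cmp C (Cmp C (Wm (i,j)) \<psi>) \<phi> = Cmp C (Wm (i,j)) (Cmp C \<psi> \<phi>)"
      using assoc[of \<phi> \<psi> "Wm (i,j)"] psi phi ij by simp
    then show ?thesis unfolding tstep_iff h_def using a b ij psi phi lin_snd lin_fst
      by (auto simp: car_iff)
  qed
  have "(\<lambda>a b. tstep (Dm C \<phi>) a b \<or> tstep (Dm C \<phi>) b a)\<^sup>*\<^sup>* (h (i,\<chi>)) (h p)"
    using sym_rtc_map[of "tstep (Cd C \<phi>)" "tstep (Dm C \<phi>)" h "(i,\<chi>)" p] hstep pin
    unfolding track_cls_def by blast
  then have "cls (Dm C \<phi>) (h p) = cls (Dm C \<phi>) (h (i,\<chi>))"
    by (intro cls_eq) (simp add: track_cls_def)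
  then show ?thesis unfolding track_def by (simp add: h_def split_beta p_def)
qed

lemma presheaf_G: "presheaf C G"
proof -
  have 1: "Act G \<phi> c \<in> Elt G (Dm C \<phi>)" if "\<phi> \<in> Mor C" "c \<in> Elt G (Cd C \<phi>)" for \<phi> c
  proof -
    from that obtain i \<chi> where c: "c = cls (Cd C \<phi>) (i, \<chi>)" "(i,\<chi>) \<in> car (Cd C \<phi>)"
      unfolding elt_G by auto
    then show ?thesis using act_G_cls[OF that(1) c(2)] that(1) unfolding elt_G
      by (auto simp: car_iff intro!: imageI)
  qed
  have 2: "Act G (Idm C U) c = c" if "U \<in> Ob C" "c \<in> Elt G U" for U c
  proof -
    from that obtain i \<chi> where c: "c = cls U (i, \<chi>)" "(i,\<chi>) \<in> car U"
      unfolding elt_G by auto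
    have ch: "\<chi> \<in> Mor C" "Dm C \<chi> = U" using c(2) by (auto simp: car_iff)
    have "(i,\<chi>) \<in> car (Cd C (Idm C U))" using c(2) that(1) by simp
    then have "Act G (Idm C U) c = cls (Dm C (Idm C U)) (i, Cmp C \<chi> (Idm C U))"
      using act_G_cls[of "Idm C U" i \<chi>] c(1) that(1) by simp
    also have "\<dots> = c" using c(1) that(1) idr[OF ch(1)] ch(2) by simp
    finally show ?thesis .
  qed
  have 3: "Act G (Cmp C \<psi> \<phi>) c = Act G \<phi> (Act G \<psi> c)"
    if "\<phi> \<in> Mor C" "\<psi> \<in> Mor C" "Cd C \<phi> = Dm C \<psi>" "c \<in> Elt G (Cd C \<psi>)" for \<phi> \<psi> c
  proof -
    from that obtain i \<chi> where c: "c = cls (Cd C \<psi>) (i, \<chi>)" "(i,\<chi>) \<in> car (Cd C \<psi>)"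
      unfolding elt_G by auto
    have a1: "Act G \<psi> c = cls (Cd C \<phi>) (i, Cmp C \<chi> \<psi>)" using act_G_cls[OF that(2) c(2)] c that by simp
    have m: "(i, Cmp C \<chi> \<psi>) \<in> car (Cd C \<phi>)" using c that by (auto simp: car_iff)
    have a2: "Act G \<phi> (Act G \<psi> c) = cls (Dm C \<phi>) (i, Cmp C (Cmp C \<chi> \<psi>) \<phi>)"
      using a1 act_G_cls[OF that(1) m] by simp
    have a3: "Act G (Cmp C \<psi> \<phi>) c = cls (Dm C \<phi>) (i, Cmp C \<chi> (Cmp C \<psi> \<phi>))"
      using act_G_cls[of "Cmp C \<psi> \<phi>" i \<chi>] c that by simp
    show ?thesis using a2 a3 assoc[of \<phi> \<psi> \<chi>] that c by (simp add: car_iff)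
  qed
  show ?thesis unfolding presheaf_def using 1 2 3 by blast
qed

definition tmap :: "('o, 'm, 'e) psh \<Rightarrow> (nat \<Rightarrow> 'e) \<Rightarrow> 'o \<Rightarrow> (nat \<times> 'm) set \<Rightarrow> 'e" where
  "tmap Z z = (\<lambda>U c. case (SOME p. p \<in> c) of (i, \<psi>) \<Rightarrow> Act Z \<psi> (z i))"

lemma tmap_val:
  assumes Z: "presheaf C Z" and coh: "coherent Z z" and p: "(i, \<psi>) \<in> car U"
  shows "tmap Z z U (cls U (i, \<psi>)) = Act Z \<psi> (z i)"
proof -
  define g where "g = (\<lambda>(i, \<psi>). Act Z \<psi> (z i))"
  have resp: "g a = g b" if "tstep U a b" for a b
  proof -
    from that obtain i j \<psi> where ij: "(i,j) \<in> lin_mor ws" and a: "a = (i, \<psi>)"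
      and b: "b = (j, Cmp C (Wm (i,j)) \<psi>)" and ac: "a \<in> car U"
      unfolding tstep_iff by blast
    have psi: "\<psi> \<in> Mor C" "Cd C \<psi> = Wo i" using ac a car_iff by auto
    have "Act Z (Cmp C (Wm (i,j)) \<psi>) (z j) = Act Z \<psi> (Act Z (Wm (i,j)) (z j))"
      using psh_comp[OF Z, of \<psi> "Wm (i,j)" "z j"] psi ij coh lin_snd unfolding coherent_def by auto
    also have "\<dots> = Act Z \<psi> (z i)" using coh ij unfolding coherent_def by auto
    finally show ?thesis unfolding g_def a b by simp
  qed
  have "(SOME p. p \<in> cls U (i,\<psi>)) \<in> cls U (i,\<psi>)" by (rule someI, rule cls_self)
  then have "g (SOME p. p \<in> cls U (i,\<psi>)) = g (i,\<psi>)" using cls_inv[where U=U and g=g] resp by blast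
  then show ?thesis unfolding tmap_def g_def by (simp add: split_beta)
qed

lemma tmap_pm:
  assumes Z: "presheaf C Z" and coh: "coherent Z z"
  shows "psh_map C G Z (tmap Z z)"
proof -
  have 1: "tmap Z z U c \<in> Elt Z U" if "U \<in> Ob C" "c \<in> Elt G U" for U c
  proof -
    from that obtain i \<chi> where c: "c = cls U (i, \<chi>)" "(i,\<chi>) \<in> car U"
      unfolding elt_G by auto
    then show ?thesis using tmap_val[OF Z coh c(2)] psh_act[OF Z, of \<chi> "z i"] coh
      unfolding coherent_def by (auto simp: car_iff)
  qed
  have 2: "tmap Z z (Dm C \<phi>) (Act G \<phi> c) = Act Z \<phi> (tmap Z z (Cd C \<phi>) c)"
    if "\<phi> \<in> Mor C" "c \<in> Elt G (Cd C \<phi>)" for \<phi> c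
  proof -
    from that obtain i \<chi> where c: "c = cls (Cd C \<phi>) (i, \<chi>)" "(i,\<chi>) \<in> car (Cd C \<phi>)"
      unfolding elt_G by auto
    have m: "(i, Cmp C \<chi> \<phi>) \<in> car (Dm C \<phi>)" using c that by (auto simp: car_iff)
    show ?thesis using act_G_cls[OF that(1) c(2)] tmap_val[OF Z coh m] tmap_val[OF Z coh c(2)] c
      psh_comp[OF Z, of \<phi> \<chi> "z i"] that coh unfolding coherent_def by (auto simp: car_iff)
  qed
  show ?thesis unfolding psh_map_def using 1 2 by blast
qed

lemma bot_car: "(0, Idm C (Wo 0)) \<in> car (Wo 0)" by (simp add: car_iff)
lemma idcar: "i \<le> n \<Longrightarrow> (i, Idm C (Wo i)) \<in> car (Wo i)" by (simp add: car_iff)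

lemma pm_val:
  assumes Z: "presheaf C Z" and b: "psh_map C G Z \<beta>" and p: "(i, \<psi>) \<in> car U"
  shows "\<beta> U (cls U (i, \<psi>)) = Act Z \<psi> (\<beta> (Wo i) (cls (Wo i) (i, Idm C (Wo i))))"
proof -
  have ps: "\<psi> \<in> Mor C" "Dm C \<psi> = U" "Cd C \<psi> = Wo i" "i \<le> n" using p car_iff by auto
  have e: "Cmp C (Idm C (Wo i)) \<psi> = \<psi>" using idl[OF ps(1)] ps(3) by simp
  have "Act G \<psi> (cls (Wo i) (i, Idm C (Wo i))) = cls U (i, \<psi>)"
    using act_G_cls[of \<psi> i "Idm C (Wo i)"] ps idcar e by simp
  moreover have "cls (Wo i) (i, Idm C (Wo i)) \<in> Elt G (Wo i)" using idcar ps elt_G by auto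
  ultimately show ?thesis using pm_nat[OF b, of \<psi> "cls (Wo i) (i, Idm C (Wo i))"] ps by simp
qed

lemma pm_coherent:
  assumes Z: "presheaf C Z" and b: "psh_map C G Z \<beta>"
  shows "coherent Z (\<lambda>i. \<beta> (Wo i) (cls (Wo i) (i, Idm C (Wo i))))"
  unfolding coherent_def
proof (intro conjI allI impI)
  fix i assume "i \<le> n"
  then show "\<beta> (Wo i) (cls (Wo i) (i, Idm C (Wo i))) \<in> Elt Z (Wo i)"
    using pm_elt[OF b] idcar elt_G by auto
next
  fix i j assume ij: "(i,j) \<in> lin_mor ws"
  have c: "(j, Wm (i,j)) \<in> car (Wo i)" using ij lin_snd by (simp add: car_iff)
  have e: "Cmp C (Wm (i,j)) (Idm C (Wo i)) = Wm (i,j)" using idr[of "Wm (i,j)"] ij by simp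
  have st: "tstep (Wo i) (i, Idm C (Wo i)) (j, Wm (i,j))"
    unfolding tstep_iff
    apply (intro conjI idcar[OF lin_fst[OF ij]] c)
    apply (rule exI[of _ i], rule exI[of _ j], rule exI[of _ "Idm C (Wo i)"])
    using ij e by simp
  show "Act Z (Wm (i, j)) (\<beta> (Wo j) (cls (Wo j) (j, Idm C (Wo j)))) = \<beta> (Wo i) (cls (Wo i) (i, Idm C (Wo i)))"
    using pm_val[OF Z b c] unfolding cls_step[OF st] by (rule sym)
qed

end


context tpath begin

lemma lift:
  assumes Y: "presheaf C Y" and X: "presheaf C X" and fm: "psh_map C Y X f"
    and fo: "future_open C Y X f" and coh: "coherent X x"
    and y0: "y0 \<in> Elt Y (Wo 0)" and f0: "f (Wo 0) y0 = x 0"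
  shows "\<exists>y. coherent Y y \<and> y 0 = y0 \<and> (\<forall>i\<le>n. f (Wo i) (y i) = x i)"
proof -
  define nxt where "nxt k yk = (if ws!k = S then (SOME y'. y' \<in> Elt Y (Wo (Suc k)) \<and>
      Act Y (Wm (k, Suc k)) y' = yk \<and> f (Wo (Suc k)) y' = x (Suc k)) else Act Y (Wm (Suc k, k)) yk)" for k yk
  define y where "y = rec_nat y0 nxt"
  have yz: "y 0 = y0" and ys: "\<And>k. y (Suc k) = nxt k (y k)" by (simp_all add: y_def)
  have xel: "\<And>i. i \<le> n \<Longrightarrow> x i \<in> Elt X (Wo i)" and xc: "\<And>i j. (i,j) \<in> lin_mor ws \<Longrightarrow> Act X (Wm (i,j)) (x j) = x i"
    using coh unfolding coherent_def by auto
  have step: "y (Suc k) \<in> Elt Y (Wo (Suc k)) \<and> f (Wo (Suc k)) (y (Suc k)) = x (Suc k) \<and>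
      (ws!k \<noteq> T \<longrightarrow> Act Y (Wm (k, Suc k)) (y (Suc k)) = y k) \<and>
      (ws!k \<noteq> S \<longrightarrow> Act Y (Wm (Suc k, k)) (y k) = y (Suc k))"
    if k: "k < n" and yk: "y k \<in> Elt Y (Wo k)" and fk: "f (Wo k) (y k) = x k" for k
  proof (cases "ws!k = S")
    case True
    then have m: "(k, Suc k) \<in> lin_mor ws" using k lin_adj_up by simp
    have fw: "Wm (k, Suc k) \<in> Fwd C" using wm_fwd[OF m] by simp
    have "\<exists>y'\<in>Elt Y (Cd C (Wm (k, Suc k))). Act Y (Wm (k, Suc k)) y' = y k \<and> f (Cd C (Wm (k, Suc k))) y' = x (Suc k)"
      using fo fw yk xel[of "Suc k"] k xc[OF m] fk m unfolding future_open_def by auto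
    then have ex: "\<exists>y'. y' \<in> Elt Y (Wo (Suc k)) \<and> Act Y (Wm (k, Suc k)) y' = y k \<and> f (Wo (Suc k)) y' = x (Suc k)"
      using m by auto
    have "y (Suc k) = (SOME y'. y' \<in> Elt Y (Wo (Suc k)) \<and> Act Y (Wm (k, Suc k)) y' = y k \<and> f (Wo (Suc k)) y' = x (Suc k))"
      using ys True nxt_def by simp
    then show ?thesis using someI_ex[OF ex] True by simp
  next
    case False
    then have m: "(Suc k, k) \<in> lin_mor ws" using k lin_adj_down by simp
    let ?p = "Wm (Suc k, k)"
    have ysk: "y (Suc k) = Act Y ?p (y k)" using ys False nxt_def by simp
    have el: "y (Suc k) \<in> Elt Y (Wo (Suc k))" using ysk psh_act[OF Y, of ?p "y k"] m yk by simp
    have fv: "f (Wo (Suc k)) (y (Suc k)) = x (Suc k)"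
      using ysk pm_nat[OF fm, of ?p "y k"] m yk fk xc[OF m] by simp
    have up: "Act Y (Wm (k, Suc k)) (y (Suc k)) = y k" if nt: "ws!k \<noteq> T"
    proof -
      have m2: "(k, Suc k) \<in> lin_mor ws" using k nt lin_adj_up by simp
      have "Act Y (Wm (k, Suc k)) (y (Suc k)) = Act Y (Cmp C ?p (Wm (k, Suc k))) (y k)"
        using ysk psh_comp[OF Y, of "Wm (k, Suc k)" ?p "y k"] m m2 yk by simp
      also have "\<dots> = Act Y (Wm (k,k)) (y k)" using wm_comp[OF m2 m] by simp
      also have "\<dots> = y k" using wm_id[of k] k psh_id[OF Y, of "Wo k" "y k"] yk by simp
      finally show ?thesis .
    qed
    show ?thesis using el fv up ysk by simp
  qed
  have all: "i \<le> n \<Longrightarrow> y i \<in> Elt Y (Wo i) \<and> f (Wo i) (y i) = x i" for i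
  proof (induction i)
    case 0 then show ?case using yz y0 f0 by simp
  next
    case (Suc i) then show ?case using step[of i] by simp
  qed
  have "coherent Y y"
    by (rule coherent_adj[OF Y]) (use all step in auto)
  then show ?thesis using yz all by blast
qed

end

locale gctx = catl +
  fixes A :: "('o, 'm, 'a) psh" and B :: "('o, 'm, 'b) psh" and W a b
  assumes A: "presheaf C A" and B: "presheaf C B" and W: "W \<in> Ob C"
    and a: "a \<in> Elt A W" and b: "b \<in> Elt B W"
begin

abbreviation "gcar U \<equiv> Inl ` Elt A U \<union> Inr ` Elt B U"
abbreviation "gstep \<equiv> glue_step C A B W a b"
abbreviation "gcls \<equiv> glue_cls C A B W a b"
abbreviation "GG \<equiv> glue C A B W a b"

lemma gstep_car: "gstep U p q \<Longrightarrow> p \<in> gcar U \<and> q \<in> gcar U"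
  unfolding glue_step_def using psh_act[OF A] psh_act[OF B] a b by fastforce

lemma gcls_self: "p \<in> gcls U p"
  unfolding glue_cls_def by simp

lemma gcls_eq: "q \<in> gcls U p \<Longrightarrow> gcls U q = gcls U p"
  unfolding glue_cls_def using sym_rtc_cls by fastforce

lemma gcls_sub: "p \<in> gcar U \<Longrightarrow> q \<in> gcls U p \<Longrightarrow> q \<in> gcar U"
  unfolding glue_cls_def
  using sym_rtc_inv[of "gstep U" "\<lambda>x. x \<in> gcar U" p q] gstep_car by blast

lemma gcls_inv:
  assumes "\<And>a b. gstep U a b \<Longrightarrow> g a = g b" and "q \<in> gcls U p"
  shows "g q = g p"
  using sym_rtc_inv[of "gstep U" g p q] assms unfolding glue_cls_def by blast

lemma elt_GG: "Elt GG U = gcls U ` gcar U"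
  unfolding glue_def by simp

lemma gident: "gcls W (Inl a) = gcls W (Inr b)"
proof -
  have "gstep W (Inl a) (Inr b)"
    unfolding glue_step_def using W a b psh_id[OF A W a] psh_id[OF B W b]
    by (intro bexI[of _ "Idm C W"]) auto
  then show ?thesis by (intro gcls_eq[symmetric]) (auto simp: glue_cls_def)
qed

lemma act_GG:
  assumes phi: "\<phi> \<in> Mor C" and p: "p \<in> gcar (Cd C \<phi>)"
  shows "Act GG \<phi> (gcls (Cd C \<phi>) p) = gcls (Dm C \<phi>) (map_sum (Act A \<phi>) (Act B \<phi>) p)"
proof -
  define h where "h = map_sum (Act A \<phi>) (Act B \<phi>)"
  define p' where "p' = (SOME q. q \<in> gcls (Cd C \<phi>) p)"
  have pin: "p' \<in> gcls (Cd C \<phi>) p" unfolding p'_def by (rule someI, rule gcls_self)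
  have hstep: "gstep (Dm C \<phi>) (h u) (h v)" if "gstep (Cd C \<phi>) u v" for u v
  proof -
    from that obtain \<psi> where ps: "\<psi> \<in> Mor C" "Dm C \<psi> = Cd C \<phi>" "Cd C \<psi> = W"
      and u: "u = Inl (Act A \<psi> a)" and v: "v = Inr (Act B \<psi> b)"
      unfolding glue_step_def by blast
    have "Act A \<phi> (Act A \<psi> a) = Act A (Cmp C \<psi> \<phi>) a" using psh_comp[OF A phi ps(1)] ps a by simp
    moreover have "Act B \<phi> (Act B \<psi> b) = Act B (Cmp C \<psi> \<phi>) b" using psh_comp[OF B phi ps(1)] ps b by simp
    ultimately show ?thesis unfolding glue_step_def h_def u v using ps phi
      by (intro bexI[of _ "Cmp C \<psi> \<phi>"]) auto
  qed
  have "(\<lambda>u v. gstep (Dm C \<phi>) u v \<or> gstep (Dm C \<phi>) v u)\<^sup>*\<^sup>* (h p) (h p')"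
    using sym_rtc_map[of "gstep (Cd C \<phi>)" "gstep (Dm C \<phi>)" h p p'] hstep pin
    unfolding glue_cls_def by blast
  then have "gcls (Dm C \<phi>) (h p') = gcls (Dm C \<phi>) (h p)"
    by (intro gcls_eq) (simp add: glue_cls_def)
  then show ?thesis unfolding glue_def by (simp add: h_def p'_def)
qed

lemma gcar_map: "\<phi> \<in> Mor C \<Longrightarrow> p \<in> gcar (Cd C \<phi>) \<Longrightarrow> map_sum (Act A \<phi>) (Act B \<phi>) p \<in> gcar (Dm C \<phi>)"
  using psh_act[OF A] psh_act[OF B] by auto

lemma inl_pm: "psh_map C A GG (\<lambda>U x. gcls U (Inl x))"
  unfolding psh_map_def using act_GG elt_GG by auto

lemma inr_pm: "psh_map C B GG (\<lambda>U x. gcls U (Inr x))"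
  unfolding psh_map_def using act_GG elt_GG by auto

definition gmap :: "('o \<Rightarrow> 'a \<Rightarrow> 'z) \<Rightarrow> ('o \<Rightarrow> 'b \<Rightarrow> 'z) \<Rightarrow> 'o \<Rightarrow> ('a + 'b) set \<Rightarrow> 'z" where
  "gmap ga gb = (\<lambda>U c. case_sum (ga U) (gb U) (SOME p. p \<in> c))"

lemma gmap_val:
  assumes Z: "presheaf C Z" and ga: "psh_map C A Z ga" and gb: "psh_map C B Z gb"
    and ab: "ga W a = gb W b" and p: "p \<in> gcar U"
  shows "gmap ga gb U (gcls U p) = case_sum (ga U) (gb U) p"
proof -
  define g where "g = case_sum (ga U) (gb U)"
  have resp: "g u = g v" if "gstep U u v" for u v
  proof -
    from that obtain \<psi> where ps: "\<psi> \<in> Mor C" "Dm C \<psi> = U" "Cd C \<psi> = W"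
      and u: "u = Inl (Act A \<psi> a)" and v: "v = Inr (Act B \<psi> b)"
      unfolding glue_step_def by blast
    have "ga U (Act A \<psi> a) = Act Z \<psi> (ga W a)" using pm_nat[OF ga ps(1)] ps a by simp
    moreover have "gb U (Act B \<psi> b) = Act Z \<psi> (gb W b)" using pm_nat[OF gb ps(1)] ps b by simp
    ultimately show ?thesis unfolding g_def u v using ab by simp
  qed
  have "(SOME q. q \<in> gcls U p) \<in> gcls U p" by (rule someI, rule gcls_self)
  then have "g (SOME q. q \<in> gcls U p) = g p" using gcls_inv[where U=U and g=g] resp by blast
  then show ?thesis unfolding gmap_def g_def by simp
qed

lemma gmap_pm:
  assumes Z: "presheaf C Z" and ga: "psh_map C A Z ga" and gb: "psh_map C B Z gb"
    and ab: "ga W a = gb W b"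
  shows "psh_map C GG Z (gmap ga gb)"
proof -
  have 1: "gmap ga gb U c \<in> Elt Z U" if "U \<in> Ob C" "c \<in> Elt GG U" for U c
  proof -
    from that obtain p where c: "c = gcls U p" "p \<in> gcar U" unfolding elt_GG by auto
    then show ?thesis using gmap_val[OF Z ga gb ab c(2)] pm_elt[OF ga] pm_elt[OF gb] that by auto
  qed
  have 2: "gmap ga gb (Dm C \<phi>) (Act GG \<phi> c) = Act Z \<phi> (gmap ga gb (Cd C \<phi>) c)"
    if "\<phi> \<in> Mor C" "c \<in> Elt GG (Cd C \<phi>)" for \<phi> c
  proof -
    from that obtain p where c: "c = gcls (Cd C \<phi>) p" "p \<in> gcar (Cd C \<phi>)" unfolding elt_GG by auto
    have e1: "gmap ga gb (Dm C \<phi>) (Act GG \<phi> c) = case_sum (ga (Dm C \<phi>)) (gb (Dm C \<phi>)) (map_sum (Act A \<phi>) (Act B \<phi>) p)"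
      using act_GG[OF that(1) c(2)] c(1) gmap_val[OF Z ga gb ab gcar_map[OF that(1) c(2)]] by simp
    have e2: "gmap ga gb (Cd C \<phi>) c = case_sum (ga (Cd C \<phi>)) (gb (Cd C \<phi>)) p"
      using gmap_val[OF Z ga gb ab c(2)] c(1) by simp
    show ?thesis using e1 e2 c(2) pm_nat[OF ga that(1)] pm_nat[OF gb that(1)] by auto
  qed
  show ?thesis unfolding psh_map_def using 1 2 by blast
qed

end


lemma lin_S: "lin_mor [S] = {(0,0),(1,1),(0,1)}"
  unfolding lin_mor_def by (auto simp: le_Suc_eq)

lemma lin_nil: "lin_mor [] = {(0,0)}"
  unfolding lin_mor_def by auto

lemma allI_S: "\<not> all_I [S] 0 1"
  unfolding all_I_def by auto

lemma path_S:
  fixes D :: "('o,'m) dcat"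
  assumes cat: "category D" and m: "m \<in> Mor D" "m \<in> Fwd D"
    and i0: "Idm D (Dm D m) \<in> Fwd D" "Idm D (Dm D m) \<in> Bwd D"
    and i1: "Idm D (Cd D m) \<in> Fwd D" "Idm D (Cd D m) \<in> Bwd D"
  shows "path D [S] (\<lambda>i. if i = 0 then Dm D m else Cd D m)
     (\<lambda>(i,j). if i = j then Idm D (if i = 0 then Dm D m else Cd D m) else m)"
proof -
  interpret catl D by (rule catl.intro[OF cat])
  have lt: "{0..length [S]} = {0,1}" by auto
  show ?thesis unfolding path_def dfunctor_def lin_simps lin_S lt
    using m i0 i1 allI_S idl[of "Idm D (Dm D m)"] idl[of "Idm D (Cd D m)"] by (auto simp: lin_S)
qed

lemma path_nil:
  fixes D :: "('o,'m) dcat"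
  assumes cat: "category D" and U: "U \<in> Ob D" "Idm D U \<in> Fwd D" "Idm D U \<in> Bwd D"
  shows "path D [] (\<lambda>i. U) (\<lambda>m. Idm D U)"
proof -
  interpret catl D by (rule catl.intro[OF cat])
  show ?thesis unfolding path_def dfunctor_def lin_simps lin_nil using U idl[of "Idm D U"] by auto
qed

lemma elcat_simps[simp]:
  "(U,x) \<in> Ob (elcat C X) \<longleftrightarrow> U \<in> Ob C \<and> x \<in> Elt X U"
  "(\<phi>,x) \<in> Mor (elcat C X) \<longleftrightarrow> \<phi> \<in> Mor C \<and> x \<in> Elt X (Cd C \<phi>)"
  "Dm (elcat C X) (\<phi>,x) = (Dm C \<phi>, Act X \<phi> x)"
  "Cd (elcat C X) (\<phi>,x) = (Cd C \<phi>, x)"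
  "Idm (elcat C X) (U,x) = (Idm C U, x)"
  "Cmp (elcat C X) (\<psi>,x') (\<phi>,x) = (Cmp C \<psi> \<phi>, x')"
  "(\<phi>,x) \<in> Fwd (elcat C X) \<longleftrightarrow> \<phi> \<in> Fwd C \<and> x \<in> Elt X (Cd C \<phi>)"
  "(\<phi>,x) \<in> Bwd (elcat C X) \<longleftrightarrow> \<phi> \<in> Bwd C \<and> x \<in> Elt X (Cd C \<phi>)"
  "Ef_ob f (U, y) = (U, f U y)"
  "Ef_mor C f (\<phi>, y) = (\<phi>, f (Cd C \<phi>) y)"
  unfolding elcat_def Ef_ob_def Ef_mor_def by auto

lemma elcat_cat:
  assumes cat: "category C" and X: "presheaf C X"
  shows "category (elcat C X)"
proof -
  interpret catl C by (rule catl.intro[OF cat])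
  have 1: "\<forall>U\<in>Ob (elcat C X). Idm (elcat C X) U \<in> Mor (elcat C X) \<and> Dm (elcat C X) (Idm (elcat C X) U) = U \<and>
      Cd (elcat C X) (Idm (elcat C X) U) = U"
    using psh_id[OF X] by auto
  have 2: "\<forall>f\<in>Mor (elcat C X). Dm (elcat C X) f \<in> Ob (elcat C X) \<and> Cd (elcat C X) f \<in> Ob (elcat C X)"
    using psh_act[OF X] by auto
  have 3: "Cmp (elcat C X) g f \<in> Mor (elcat C X) \<and> Dm (elcat C X) (Cmp (elcat C X) g f) = Dm (elcat C X) f \<and>
        Cd (elcat C X) (Cmp (elcat C X) g f) = Cd (elcat C X) g"
    if "f \<in> Mor (elcat C X)" "g \<in> Mor (elcat C X)" "Cd (elcat C X) f = Dm (elcat C X) g" for f g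
  proof -
    obtain \<phi> x \<psi> x' where f: "f = (\<phi>,x)" and g: "g = (\<psi>,x')" by (cases f, cases g) auto
    have h: "\<phi> \<in> Mor C" "\<psi> \<in> Mor C" "Cd C \<phi> = Dm C \<psi>" "x = Act X \<psi> x'" "x' \<in> Elt X (Cd C \<psi>)"
      using that f g by auto
    show ?thesis using h psh_comp[OF X h(1) h(2) h(3) h(5)] f g by simp
  qed
  have 4: "\<forall>f\<in>Mor (elcat C X). Cmp (elcat C X) f (Idm (elcat C X) (Dm (elcat C X) f)) = f \<and>
      Cmp (elcat C X) (Idm (elcat C X) (Cd (elcat C X) f)) f = f"
    by auto
  have 5: "Cmp (elcat C X) h (Cmp (elcat C X) g f) = Cmp (elcat C X) (Cmp (elcat C X) h g) f"
    if "f \<in> Mor (elcat C X)" "g \<in> Mor (elcat C X)" "h \<in> Mor (elcat C X)"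
      "Cd (elcat C X) f = Dm (elcat C X) g" "Cd (elcat C X) g = Dm (elcat C X) h" for f g h
  proof -
    obtain \<phi> x \<psi> x' \<chi> x'' where f: "f = (\<phi>,x)" and g: "g = (\<psi>,x')" and hh: "h = (\<chi>, x'')"
      by (cases f, cases g, cases h) auto
    show ?thesis using that f g hh assoc[of \<phi> \<psi> \<chi>] by auto
  qed
  show ?thesis unfolding category_def using 1 2 3 4 5 by blast
qed

lemma dcat_facts:
  assumes "dcategory C"
  shows "category C" "\<And>U. U \<in> Ob C \<Longrightarrow> Idm C U \<in> Fwd C" "\<And>U. U \<in> Ob C \<Longrightarrow> Idm C U \<in> Bwd C"
    "Fwd C \<subseteq> Mor C" "Bwd C \<subseteq> Mor C"
  using assms unfolding dcategory_def wide_subcat_def by auto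

lemma PL_FO:
  assumes dc: "dcategory C" and Y: "presheaf C Y" and X: "presheaf C X" and fm: "psh_map C Y X f"
    and pl: "path_lifting C Y X f"
  shows "future_open C Y X f"
  unfolding future_open_def
proof (intro ballI impI)
  interpret catl C by (rule catl.intro[OF dcat_facts(1)[OF dc]])
  fix \<phi> y x assume phi: "\<phi> \<in> Fwd C" and y: "y \<in> Elt Y (Dm C \<phi>)" and x: "x \<in> Elt X (Cd C \<phi>)"
    and e: "Act X \<phi> x = f (Dm C \<phi>) y"
  have pm: "\<phi> \<in> Mor C" using phi dcat_facts(4)[OF dc] by auto
  let ?m = "(\<phi>, x)"
  let ?E = "elcat C X"
  have P: "path ?E [S] (\<lambda>i. if i = 0 then Dm ?E ?m else Cd ?E ?m)
     (\<lambda>(i,j). if i = j then Idm ?E (if i = 0 then Dm ?E ?m else Cd ?E ?m) else ?m)"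
    by (rule path_S[OF elcat_cat[OF dcat_facts(1)[OF dc] X]])
      (use pm phi x dcat_facts(2,3)[OF dc] psh_act[OF X pm x] in auto)
  have yo: "(Dm C \<phi>, y) \<in> Ob (elcat C Y)" using y pm by simp
  have e0: "Ef_ob f (Dm C \<phi>, y) = (if (0::nat) = 0 then Dm ?E ?m else Cd ?E ?m)" using e by simp
  obtain Bo Bm where B: "path (elcat C Y) [S] Bo Bm" "Bo 0 = (Dm C \<phi>, y)"
    "\<forall>m\<in>Mor (Lin [S]). Ef_mor C f (Bm m) = (\<lambda>(i,j). if i = j then Idm ?E (if i = 0 then Dm ?E ?m else Cd ?E ?m) else ?m) m"
    using pl[unfolded path_lifting_def, rule_format, OF P yo e0] by blast
  have m01: "(0::nat,1::nat) \<in> Mor (Lin [S])" by (simp add: lin_S)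
  have bm: "Bm (0,1) \<in> Mor (elcat C Y)" "Dm (elcat C Y) (Bm (0,1)) = Bo 0"
  proof -
    have "\<forall>f\<in>Mor (Lin [S]). Bm f \<in> Mor (elcat C Y) \<and> Dm (elcat C Y) (Bm f) = Bo (Dm (Lin [S]) f)"
      using B(1) unfolding path_def dfunctor_def by blast
    then show "Bm (0,1) \<in> Mor (elcat C Y)" "Dm (elcat C Y) (Bm (0,1)) = Bo 0"
      using m01 by auto
  qed
  obtain \<psi> y' where bmv: "Bm (0,1) = (\<psi>, y')" by (cases "Bm (0,1)")
  have ef: "Ef_mor C f (Bm (0,1)) = ?m" using B(3) m01 by auto
  then have "\<psi> = \<phi>" "f (Cd C \<phi>) y' = x" using bmv by auto
  then show "\<exists>y'\<in>Elt Y (Cd C \<phi>). Act Y \<phi> y' = y \<and> f (Cd C \<phi>) y' = x"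
    using bm bmv B(2) by auto
qed



lemma FO_PL:
  assumes dc: "dcategory C" and Y: "presheaf C Y" and X: "presheaf C X" and fm: "psh_map C Y X f"
    and fo: "future_open C Y X f"
  shows "path_lifting C Y X f"
  unfolding path_lifting_def
proof (intro allI impI ballI)
  interpret catl C by (rule catl.intro[OF dcat_facts(1)[OF dc]])
  fix ws Ao Am y0 assume P: "path (elcat C X) ws Ao Am" and yo: "y0 \<in> Ob (elcat C Y)"
    and e0: "Ef_ob f y0 = Ao 0"
  define Wo where "Wo i = fst (Ao i)" for i
  define Wm where "Wm m = fst (Am m)" for m
  define x where "x i = snd (Ao i)" for i
  let ?E = "elcat C X"
  have dob: "\<forall>U\<in>Ob (Lin ws). Ao U \<in> Ob ?E"
    and dmor: "\<forall>f\<in>Mor (Lin ws). Am f \<in> Mor ?E \<and> Dm ?E (Am f) = Ao (Dm (Lin ws) f) \<and> Cd ?E (Am f) = Ao (Cd (Lin ws) f)"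
    and did: "\<forall>U\<in>Ob (Lin ws). Am (Idm (Lin ws) U) = Idm ?E (Ao U)"
    and dcmp: "\<forall>f\<in>Mor (Lin ws). \<forall>g\<in>Mor (Lin ws). Cd (Lin ws) f = Dm (Lin ws) g \<longrightarrow> Am (Cmp (Lin ws) g f) = Cmp ?E (Am g) (Am f)"
    and dfw: "\<forall>f\<in>Fwd (Lin ws). Am f \<in> Fwd ?E"
    and dbw: "\<forall>f\<in>Bwd (Lin ws). Am f \<in> Bwd ?E"
    using P unfolding path_def dfunctor_def by blast+
  have ob: "Wo i \<in> Ob C \<and> x i \<in> Elt X (Wo i)" if "i \<le> length ws" for i
  proof -
    have "Ao i \<in> Ob ?E" using dob that by simp
    then show ?thesis unfolding Wo_def x_def by (cases "Ao i") simp
  qed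
  have mor: "Am (i,j) = (Wm (i,j), x j) \<and> Wm (i,j) \<in> Mor C \<and> Dm C (Wm (i,j)) = Wo i \<and> Cd C (Wm (i,j)) = Wo j
      \<and> Act X (Wm (i,j)) (x j) = x i" if "(i,j) \<in> lin_mor ws" for i j
  proof -
    obtain \<phi> x' where am: "Am (i,j) = (\<phi>, x')" by (cases "Am (i,j)")
    have "Am (i,j) \<in> Mor ?E \<and> Dm ?E (Am (i,j)) = Ao i \<and> Cd ?E (Am (i,j)) = Ao j"
      using dmor that by auto
    then have h: "\<phi> \<in> Mor C" "(Dm C \<phi>, Act X \<phi> x') = Ao i" "(Cd C \<phi>, x') = Ao j" using am by auto
    show ?thesis unfolding Wm_def Wo_def x_def using am h by (auto simp flip: h(2,3))
  qed
  have pth: "path C ws Wo Wm"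
    unfolding path_def dfunctor_def
  proof (intro conjI ballI impI)
    fix U assume "U \<in> Ob (Lin ws)" then show "Wo U \<in> Ob C" using ob by simp
  next
    fix m assume "m \<in> Mor (Lin ws)"
    then obtain i j where mm: "m = (i,j)" "(i,j) \<in> lin_mor ws" by (cases m) auto
    show "Wm m \<in> Mor C" "Dm C (Wm m) = Wo (Dm (Lin ws) m)" "Cd C (Wm m) = Wo (Cd (Lin ws) m)"
      using mor[OF mm(2)] unfolding mm(1) by simp_all
  next
    fix U assume U: "U \<in> Ob (Lin ws)"
    then have "Am (U,U) = Idm ?E (Ao U)" using did by simp
    then show "Wm (Idm (Lin ws) U) = Idm C (Wo U)" unfolding Wm_def Wo_def by (cases "Ao U") simp
  next
    fix m1 m2 assume m1: "m1 \<in> Mor (Lin ws)" and m2: "m2 \<in> Mor (Lin ws)" and c: "Cd (Lin ws) m1 = Dm (Lin ws) m2"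
    then have "Am (Cmp (Lin ws) m2 m1) = Cmp ?E (Am m2) (Am m1)" using dcmp by blast
    then show "Wm (Cmp (Lin ws) m2 m1) = Cmp C (Wm m2) (Wm m1)" unfolding Wm_def
      by (cases "Am m2", cases "Am m1") simp
  next
    fix m assume "m \<in> Fwd (Lin ws)"
    then have "Am m \<in> Fwd ?E" using dfw by blast
    then show "Wm m \<in> Fwd C" unfolding Wm_def by (cases "Am m") simp
  next
    fix m assume "m \<in> Bwd (Lin ws)"
    then have "Am m \<in> Bwd ?E" using dbw by blast
    then show "Wm m \<in> Bwd C" unfolding Wm_def by (cases "Am m") simp
  qed
  interpret tpath C ws Wo Wm by (rule tpath.intro, rule catl.intro[OF dcat_facts(1)[OF dc]], rule tpath_axioms.intro[OF pth])
  have coh: "coherent X x" unfolding coherent_def using ob mor by auto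
  obtain y0' where y0v: "y0 = (Wo 0, y0')" "y0' \<in> Elt Y (Wo 0)" "f (Wo 0) y0' = x 0"
    using yo e0 unfolding Wo_def x_def by (cases y0, cases "Ao 0") auto
  obtain yy where yy: "coherent Y yy" "yy 0 = y0'" "\<forall>i\<le>length ws. f (Wo i) (yy i) = x i"
    using lift[OF Y X fm fo coh y0v(2,3)] by blast
  have yel: "\<And>i. i \<le> length ws \<Longrightarrow> yy i \<in> Elt Y (Wo i)"
    and yc: "\<And>i j. (i,j) \<in> lin_mor ws \<Longrightarrow> Act Y (Wm (i,j)) (yy j) = yy i"
    using yy(1) unfolding coherent_def by auto
  define Bo where "Bo i = (Wo i, yy i)" for i
  define Bm where "Bm m = (Wm m, yy (snd m))" for m :: "nat \<times> nat"
  have "path (elcat C Y) ws Bo Bm"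
    unfolding path_def dfunctor_def
  proof (intro conjI ballI impI)
    fix U assume "U \<in> Ob (Lin ws)" then show "Bo U \<in> Ob (elcat C Y)" using ob yel Bo_def by simp
  next
    fix m assume "m \<in> Mor (Lin ws)"
    then obtain i j where m: "m = (i,j)" "(i,j) \<in> lin_mor ws" by (cases m) auto
    show "Bm m \<in> Mor (elcat C Y)" "Dm (elcat C Y) (Bm m) = Bo (Dm (Lin ws) m)" "Cd (elcat C Y) (Bm m) = Bo (Cd (Lin ws) m)"
      using mor[OF m(2)] yel[OF lin_snd[OF m(2)]] yc[OF m(2)] unfolding m Bm_def Bo_def by simp_all
  next
    fix U assume U: "U \<in> Ob (Lin ws)"
    then show "Bm (Idm (Lin ws) U) = Idm (elcat C Y) (Bo U)" using did unfolding Bm_def Bo_def Wm_def Wo_def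
      by (cases "Ao U") auto
  next
    fix m1 m2 assume m1: "m1 \<in> Mor (Lin ws)" and m2: "m2 \<in> Mor (Lin ws)" and c: "Cd (Lin ws) m1 = Dm (Lin ws) m2"
    then have "Am (Cmp (Lin ws) m2 m1) = Cmp ?E (Am m2) (Am m1)" using dcmp by blast
    then have "Wm (Cmp (Lin ws) m2 m1) = Cmp C (Wm m2) (Wm m1)" unfolding Wm_def
      by (cases "Am m2", cases "Am m1") simp
    then show "Bm (Cmp (Lin ws) m2 m1) = Cmp (elcat C Y) (Bm m2) (Bm m1)" unfolding Bm_def by simp
  next
    fix m assume mf: "m \<in> Fwd (Lin ws)"
    then obtain i j where m: "m = (i,j)" "(i,j) \<in> lin_mor ws" by (cases m) auto
    have "Am m \<in> Fwd ?E" using dfw mf by blast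
    then show "Bm m \<in> Fwd (elcat C Y)" using mor[OF m(2)] yel[OF lin_snd[OF m(2)]] unfolding Bm_def m by simp
  next
    fix m assume mf: "m \<in> Bwd (Lin ws)"
    then obtain i j where m: "m = (i,j)" "(i,j) \<in> lin_mor ws" by (cases m) auto
    have "Am m \<in> Bwd ?E" using dbw mf by blast
    then show "Bm m \<in> Bwd (elcat C Y)" using mor[OF m(2)] yel[OF lin_snd[OF m(2)]] unfolding Bm_def m by simp
  qed
  moreover have "Bo 0 = y0" using y0v yy(2) Bo_def by simp
  moreover have "\<forall>i\<in>Ob (Lin ws). Ef_ob f (Bo i) = Ao i"
  proof
    fix i assume "i \<in> Ob (Lin ws)"
    then show "Ef_ob f (Bo i) = Ao i" using yy(3) unfolding Bo_def Wo_def x_def by (cases "Ao i") auto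
  qed
  moreover have "\<forall>m\<in>Mor (Lin ws). Ef_mor C f (Bm m) = Am m"
  proof
    fix m assume "m \<in> Mor (Lin ws)"
    then obtain i j where m: "m = (i,j)" "(i,j) \<in> lin_mor ws" by (cases m) auto
    show "Ef_mor C f (Bm m) = Am m" using mor[OF m(2)] yy(3) lin_snd[OF m(2)] unfolding Bm_def m by simp
  qed
  ultimately show "\<exists>Bo Bm. path (elcat C Y) ws Bo Bm \<and> Bo 0 = y0 \<and> (\<forall>i\<in>Ob (Lin ws). Ef_ob f (Bo i) = Ao i) \<and>
      (\<forall>m\<in>Mor (Lin ws). Ef_mor C f (Bm m) = Am m)" by blast
qed



lemma FO_TL:
  assumes dc: "dcategory C" and Y: "presheaf C Y" and X: "presheaf C X" and fm: "psh_map C Y X f"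
    and fo: "future_open C Y X f"
  shows "track_lifting C Y X f"
  unfolding track_lifting_def
proof (intro allI impI ballI)
  fix ws Wo Wm \<alpha> y assume P: "path C ws Wo Wm" and am: "psh_map C (track C ws Wo Wm) X \<alpha>"
    and y: "y \<in> Elt Y (Wo 0)" and e: "f (Wo 0) y = \<alpha> (Wo 0) (track_bot C ws Wo Wm)"
  interpret tpath C ws Wo Wm by (rule tpath.intro, rule catl.intro[OF dcat_facts(1)[OF dc]], rule tpath_axioms.intro[OF P])
  define x where "x i = \<alpha> (Wo i) (cls (Wo i) (i, Idm C (Wo i)))" for i
  have coh: "coherent X x" unfolding x_def by (rule pm_coherent[OF X am])
  have f0: "f (Wo 0) y = x 0" using e unfolding x_def track_bot_def by simp
  obtain yy where yy: "coherent Y yy" "yy 0 = y" "\<forall>i\<le>n. f (Wo i) (yy i) = x i"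
    using lift[OF Y X fm fo coh y f0] by blast
  define \<beta> where "\<beta> = tmap Y yy"
  have bm: "psh_map C G Y \<beta>" unfolding \<beta>_def by (rule tmap_pm[OF Y yy(1)])
  have b0: "\<beta> (Wo 0) (track_bot C ws Wo Wm) = y"
    unfolding \<beta>_def track_bot_def using tmap_val[OF Y yy(1) bot_car] psh_id[OF Y, of "Wo 0" "yy 0"] yy(1,2) y
    unfolding coherent_def by simp
  have fb: "f U (\<beta> U z) = \<alpha> U z" if U: "U \<in> Ob C" and z: "z \<in> Elt G U" for U z
  proof -
    from z obtain i \<psi> where zc: "z = cls U (i,\<psi>)" and p: "(i,\<psi>) \<in> car U" unfolding elt_G by auto
    have ps: "\<psi> \<in> Mor C" "Dm C \<psi> = U" "Cd C \<psi> = Wo i" "i \<le> n" using p car_iff by auto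
    have yi: "yy i \<in> Elt Y (Wo i)" using yy(1) ps unfolding coherent_def by auto
    have "f U (\<beta> U z) = f U (Act Y \<psi> (yy i))" unfolding \<beta>_def zc using tmap_val[OF Y yy(1) p] by simp
    also have "\<dots> = Act X \<psi> (f (Wo i) (yy i))" using pm_nat[OF fm ps(1)] ps yi by simp
    also have "\<dots> = Act X \<psi> (x i)" using yy(3) ps by simp
    also have "\<dots> = \<alpha> U z" unfolding zc x_def using pm_val[OF X am p] by simp
    finally show ?thesis .
  qed
  show "\<exists>\<beta>. psh_map C (track C ws Wo Wm) Y \<beta> \<and> \<beta> (Wo 0) (track_bot C ws Wo Wm) = y \<and>
          (\<forall>U\<in>Ob C. \<forall>z\<in>Elt (track C ws Wo Wm) U. f U (\<beta> U z) = \<alpha> U z)"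
    using bm b0 fb by blast
qed

lemma S_facts:
  assumes dc: "dcategory C" and phi: "\<phi> \<in> Fwd C" and X: "presheaf C X" and x: "x \<in> Elt X (Cd C \<phi>)"
  shows "path C [S] (\<lambda>i. if i = 0 then Dm C \<phi> else Cd C \<phi>)
     (\<lambda>(i,j). if i = j then Idm C (if i = 0 then Dm C \<phi> else Cd C \<phi>) else \<phi>)"
   and "tpath.coherent [S] (\<lambda>i. if i = 0 then Dm C \<phi> else Cd C \<phi>) (\<lambda>(i,j). if i = j then Idm C (if i = 0 then Dm C \<phi> else Cd C \<phi>) else \<phi>) X (\<lambda>i. if i = 0 then Act X \<phi> x else x)"
   and "track_cls C [S] (\<lambda>i. if i = 0 then Dm C \<phi> else Cd C \<phi>) (\<lambda>(i,j). if i = j then Idm C (if i = 0 then Dm C \<phi> else Cd C \<phi>) else \<phi>) (Dm C \<phi>) (1, \<phi>) = track_cls C [S] (\<lambda>i. if i = 0 then Dm C \<phi> else Cd C \<phi>) (\<lambda>(i,j). if i = j then Idm C (if i = 0 then Dm C \<phi> else Cd C \<phi>) else \<phi>) (Dm C \<phi>) (0, Idm C (Dm C \<phi>))"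
proof -
  let ?Wo = "(\<lambda>i. if i = 0 then Dm C \<phi> else Cd C \<phi>)"
  let ?Wm = "(\<lambda>(i,j). if i = j then Idm C (if i = 0 then Dm C \<phi> else Cd C \<phi>) else \<phi>)"
  interpret catl C by (rule catl.intro[OF dcat_facts(1)[OF dc]])
  have pm: "\<phi> \<in> Mor C" using phi dcat_facts(4)[OF dc] by auto
  show P: "path C [S] ?Wo ?Wm"
    by (rule path_S[OF dcat_facts(1)[OF dc]]) (use pm phi dcat_facts(2,3)[OF dc] in auto)
  interpret tpath C "[S]" ?Wo ?Wm by (rule tpath.intro, rule catl.intro[OF dcat_facts(1)[OF dc]], rule tpath_axioms.intro[OF P])
  show "coherent X (\<lambda>i. if i = 0 then Act X \<phi> x else x)"
  proof (rule coherent_adj[OF X])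
    fix i assume "i \<le> length [S]"
    then show "(if i = 0 then Act X \<phi> x else x) \<in> Elt X (?Wo i)" using psh_act[OF X pm x] x by auto
  next
    fix k assume "k < length [S]" then show "Act X (?Wm (k, Suc k)) (if Suc k = 0 then Act X \<phi> x else x) = (if k = 0 then Act X \<phi> x else x)"
      by simp
  next
    fix k assume "k < length [S]" "[S] ! k \<noteq> S" then show "Act X (?Wm (Suc k, k)) (if k = 0 then Act X \<phi> x else x) = (if Suc k = 0 then Act X \<phi> x else x)"
      by simp
  qed
  have st: "tstep (Dm C \<phi>) (0, Idm C (Dm C \<phi>)) (1, \<phi>)"
    unfolding tstep_iff
    apply (intro conjI)
      apply (simp add: car_iff pm)
     apply (simp add: car_iff pm)
    apply (rule exI[of _ 0], rule exI[of _ 1], rule exI[of _ "Idm C (Dm C \<phi>)"])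
    using pm by (simp add: lin_S)
  show "cls (Dm C \<phi>) (1, \<phi>) = cls (Dm C \<phi>) (0, Idm C (Dm C \<phi>))" using cls_step[OF st] .
qed

lemma TL_FO:
  assumes dc: "dcategory C" and Y: "presheaf C Y" and X: "presheaf C X" and fm: "psh_map C Y X f"
    and tl: "track_lifting C Y X f"
  shows "future_open C Y X f"
  unfolding future_open_def
proof (intro ballI impI)
  interpret catl C by (rule catl.intro[OF dcat_facts(1)[OF dc]])
  fix \<phi> y x assume phi: "\<phi> \<in> Fwd C" and y: "y \<in> Elt Y (Dm C \<phi>)" and x: "x \<in> Elt X (Cd C \<phi>)"
    and e: "Act X \<phi> x = f (Dm C \<phi>) y"
  have pm: "\<phi> \<in> Mor C" using phi dcat_facts(4)[OF dc] by auto
  let ?Wo = "\<lambda>i::nat. if i = 0 then Dm C \<phi> else Cd C \<phi>"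
  let ?Wm = "\<lambda>(i::nat,j::nat). if i = j then Idm C (if i = 0 then Dm C \<phi> else Cd C \<phi>) else \<phi>"
  let ?xx = "\<lambda>i::nat. if i = 0 then Act X \<phi> x else x"
  note SF = S_facts[OF dc phi X x]
  interpret tpath C "[S]" ?Wo ?Wm by (rule tpath.intro, rule catl.intro[OF dcat_facts(1)[OF dc]], rule tpath_axioms.intro[OF SF(1)])
  define \<alpha> where "\<alpha> = tmap X ?xx"
  have am: "psh_map C G X \<alpha>" unfolding \<alpha>_def by (rule tmap_pm[OF X SF(2)])
  have y0: "y \<in> Elt Y (?Wo 0)" using y by simp
  have e0: "f (?Wo 0) y = \<alpha> (?Wo 0) (track_bot C [S] ?Wo ?Wm)"
    unfolding \<alpha>_def track_bot_def using tmap_val[OF X SF(2) bot_car] psh_id[OF X, of "Dm C \<phi>" "Act X \<phi> x"]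
      psh_act[OF X pm x] pm e by simp
  obtain \<beta> where b: "psh_map C G Y \<beta>" "\<beta> (?Wo 0) (track_bot C [S] ?Wo ?Wm) = y"
    "\<forall>U\<in>Ob C. \<forall>z\<in>Elt G U. f U (\<beta> U z) = \<alpha> U z"
    using tl[unfolded track_lifting_def, rule_format, OF SF(1) am y0 e0] by blast
  have c1: "(1, Idm C (Cd C \<phi>)) \<in> car (Cd C \<phi>)" using pm by (simp add: car_iff)
  have c1e: "cls (Cd C \<phi>) (1, Idm C (Cd C \<phi>)) \<in> Elt G (Cd C \<phi>)" using c1 elt_G by auto
  define y' where "y' = \<beta> (Cd C \<phi>) (cls (Cd C \<phi>) (1, Idm C (Cd C \<phi>)))"
  have y'e: "y' \<in> Elt Y (Cd C \<phi>)" unfolding y'_def using pm_elt[OF b(1) _ c1e] pm by simp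
  have fy': "f (Cd C \<phi>) y' = x" unfolding y'_def using b(3) c1e pm tmap_val[OF X SF(2) c1] psh_id[OF X, of "Cd C \<phi>" x] x
    unfolding \<alpha>_def by simp
  have c2: "(1, \<phi>) \<in> car (Dm C \<phi>)" using pm by (simp add: car_iff)
  have "\<beta> (Dm C \<phi>) (cls (Dm C \<phi>) (1, \<phi>)) = Act Y \<phi> y'" unfolding y'_def using pm_val[OF Y b(1) c2] by simp
  then have "Act Y \<phi> y' = y" using SF(3) b(2) unfolding track_bot_def by simp
  then show "\<exists>y'\<in>Elt Y (Cd C \<phi>). Act Y \<phi> y' = y \<and> f (Cd C \<phi>) y' = x" using y'e fy' by blast
qed



lemma FO_TE:
  assumes dc: "dcategory C" and Y: "presheaf C Y" and X: "presheaf C X" and fm: "psh_map C Y X f"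
    and fo: "future_open C Y X f"
  shows "track_extension C Y X f"
  unfolding track_extension_def Let_def
proof (intro allI impI)
  fix ws1 Wo1 Wm1 ws2 Wo2 Wm2 \<gamma> \<alpha>
  assume P1: "path C ws1 Wo1 Wm1" and P2: "path C ws2 Wo2 Wm2" and eqW: "Wo1 (length ws1) = Wo2 0"
    and gm: "psh_map C (track C ws1 Wo1 Wm1) Y \<gamma>"
    and am: "psh_map C (track_concat C ws1 Wo1 Wm1 ws2 Wo2 Wm2) X \<alpha>"
    and hj: "\<forall>U\<in>Ob C. \<forall>x\<in>Elt (track C ws1 Wo1 Wm1) U. \<alpha> U (track_concat_j C ws1 Wo1 Wm1 ws2 Wo2 Wm2 U x) = f U (\<gamma> U x)"
  have cat: "category C" using dcat_facts(1)[OF dc] .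
  interpret catl C by (rule catl.intro[OF cat])
  interpret t1: tpath C ws1 Wo1 Wm1 by (rule tpath.intro, rule catl.intro[OF cat], rule tpath_axioms.intro[OF P1])
  interpret t2: tpath C ws2 Wo2 Wm2 by (rule tpath.intro, rule catl.intro[OF cat], rule tpath_axioms.intro[OF P2])
  define W where "W = Wo1 (length ws1)"
  define a where "a = track_top C ws1 Wo1 Wm1"
  define b where "b = track_bot C ws2 Wo2 Wm2"
  have W: "W \<in> Ob C" unfolding W_def by simp
  have ae: "a \<in> Elt (track C ws1 Wo1 Wm1) W" unfolding a_def W_def track_top_def t1.elt_G
    using t1.idcar[of "length ws1"] by auto
  have be: "b \<in> Elt (track C ws2 Wo2 Wm2) W" unfolding b_def W_def track_bot_def t2.elt_G eqW
    using t2.idcar[of 0] by auto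
  interpret g: gctx C "track C ws1 Wo1 Wm1" "track C ws2 Wo2 Wm2" W a b
    by (rule gctx.intro, rule catl.intro[OF cat], rule gctx_axioms.intro[OF t1.presheaf_G t2.presheaf_G W ae be])
  have Pdef: "track_concat C ws1 Wo1 Wm1 ws2 Wo2 Wm2 = glue C (track C ws1 Wo1 Wm1) (track C ws2 Wo2 Wm2) W a b"
    unfolding track_concat_def W_def a_def b_def ..
  have jdef: "track_concat_j C ws1 Wo1 Wm1 ws2 Wo2 Wm2 = (\<lambda>U x. g.gcls U (Inl x))"
    unfolding track_concat_j_def W_def a_def b_def ..
  note am' = am[unfolded Pdef]
  define \<alpha>B where "\<alpha>B U v = \<alpha> U (g.gcls U (Inr v))" for U v
  have aBm: "psh_map C (track C ws2 Wo2 Wm2) X \<alpha>B" unfolding \<alpha>B_def by (rule pm_comp[OF g.inr_pm am'])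
  define x2 where "x2 i = \<alpha>B (Wo2 i) (t2.cls (Wo2 i) (i, Idm C (Wo2 i)))" for i
  have coh: "t2.coherent X x2" unfolding x2_def by (rule t2.pm_coherent[OF X aBm])
  have ga: "\<gamma> W a \<in> Elt Y (Wo2 0)" using pm_elt[OF gm W ae] eqW W_def by simp
  have fga: "f (Wo2 0) (\<gamma> W a) = x2 0"
  proof -
    have "f W (\<gamma> W a) = \<alpha> W (g.gcls W (Inl a))" using hj W ae jdef by simp
    also have "\<dots> = \<alpha> W (g.gcls W (Inr b))" using g.gident by simp
    finally show ?thesis unfolding x2_def \<alpha>B_def b_def track_bot_def using eqW W_def by simp
  qed
  obtain y2 where y2: "t2.coherent Y y2" "y2 0 = \<gamma> W a" "\<forall>i\<le>length ws2. f (Wo2 i) (y2 i) = x2 i"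
    using t2.lift[OF Y X fm fo coh ga fga] by blast
  define \<delta> where "\<delta> = t2.tmap Y y2"
  have dm: "psh_map C (track C ws2 Wo2 Wm2) Y \<delta>" unfolding \<delta>_def by (rule t2.tmap_pm[OF Y y2(1)])
  have dab: "\<gamma> W a = \<delta> W b"
    unfolding \<delta>_def b_def track_bot_def using t2.tmap_val[OF Y y2(1) t2.bot_car] psh_id[OF Y, of "Wo2 0" "y2 0"]
      y2(1,2) ga eqW W_def by simp
  define \<beta> where "\<beta> = g.gmap \<gamma> \<delta>"
  have bm: "psh_map C (glue C (track C ws1 Wo1 Wm1) (track C ws2 Wo2 Wm2) W a b) Y \<beta>"
    unfolding \<beta>_def by (rule g.gmap_pm[OF Y gm dm dab])
  have bj: "\<beta> U (g.gcls U (Inl u)) = \<gamma> U u" if "u \<in> Elt (track C ws1 Wo1 Wm1) U" for U u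
    unfolding \<beta>_def using g.gmap_val[OF Y gm dm dab, of "Inl u" U] that by simp
  have fb: "f U (\<beta> U z) = \<alpha> U z" if U: "U \<in> Ob C" and z: "z \<in> Elt (glue C (track C ws1 Wo1 Wm1) (track C ws2 Wo2 Wm2) W a b) U" for U z
  proof -
    from z obtain p where zp: "z = g.gcls U p" and p: "p \<in> g.gcar U" unfolding g.elt_GG by auto
    show ?thesis
    proof (cases p)
      case (Inl u)
      then have u: "u \<in> Elt (track C ws1 Wo1 Wm1) U" using p by auto
      show ?thesis using bj[OF u] hj U u jdef zp Inl by simp
    next
      case (Inr v)
      then have v: "v \<in> Elt (track C ws2 Wo2 Wm2) U" using p by auto
      then obtain i \<psi> where vc: "v = t2.cls U (i,\<psi>)" and ip: "(i,\<psi>) \<in> t2.car U" unfolding t2.elt_G by auto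
      have ps: "\<psi> \<in> Mor C" "Dm C \<psi> = U" "Cd C \<psi> = Wo2 i" "i \<le> length ws2" using ip t2.car_iff by auto
      have yi: "y2 i \<in> Elt Y (Wo2 i)" using y2(1) ps unfolding t2.coherent_def by auto
      have "\<beta> U z = \<delta> U v" unfolding \<beta>_def zp Inr using g.gmap_val[OF Y gm dm dab p] Inr by simp
      also have "\<dots> = Act Y \<psi> (y2 i)" unfolding \<delta>_def vc using t2.tmap_val[OF Y y2(1) ip] .
      finally have "f U (\<beta> U z) = f U (Act Y \<psi> (y2 i))" by simp
      also have "\<dots> = Act X \<psi> (f (Wo2 i) (y2 i))" using pm_nat[OF fm ps(1)] ps yi by simp
      also have "\<dots> = Act X \<psi> (x2 i)" using y2(3) ps by simp
      also have "\<dots> = \<alpha>B U v" unfolding vc x2_def using t2.pm_val[OF X aBm ip] by simp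
      also have "\<dots> = \<alpha> U z" unfolding \<alpha>B_def zp Inr ..
      finally show ?thesis .
    qed
  qed
  show "\<exists>\<beta>. psh_map C (track_concat C ws1 Wo1 Wm1 ws2 Wo2 Wm2) Y \<beta> \<and>
           (\<forall>U\<in>Ob C. \<forall>x\<in>Elt (track C ws1 Wo1 Wm1) U. \<beta> U (track_concat_j C ws1 Wo1 Wm1 ws2 Wo2 Wm2 U x) = \<gamma> U x) \<and>
           (\<forall>U\<in>Ob C. \<forall>z\<in>Elt (track_concat C ws1 Wo1 Wm1 ws2 Wo2 Wm2) U. f U (\<beta> U z) = \<alpha> U z)"
    unfolding Pdef jdef using bm bj fb by blast
qed



lemma TE_FO:
  assumes dc: "dcategory C" and Y: "presheaf C Y" and X: "presheaf C X" and fm: "psh_map C Y X f"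
    and te: "track_extension C Y X f"
  shows "future_open C Y X f"
  unfolding future_open_def
proof (intro ballI impI)
  have cat: "category C" using dcat_facts(1)[OF dc] .
  interpret catl C by (rule catl.intro[OF cat])
  fix \<phi> y x assume phi: "\<phi> \<in> Fwd C" and y: "y \<in> Elt Y (Dm C \<phi>)" and x: "x \<in> Elt X (Cd C \<phi>)"
    and e: "Act X \<phi> x = f (Dm C \<phi>) y"
  have pm: "\<phi> \<in> Mor C" using phi dcat_facts(4)[OF dc] by auto
  let ?Wo = "\<lambda>i::nat. if i = 0 then Dm C \<phi> else Cd C \<phi>"
  let ?Wm = "\<lambda>(i::nat,j::nat). if i = j then Idm C (if i = 0 then Dm C \<phi> else Cd C \<phi>) else \<phi>"
  let ?xx = "\<lambda>i::nat. if i = 0 then Act X \<phi> x else x"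
  let ?V1 = "\<lambda>i::nat. Dm C \<phi>"
  let ?M1 = "\<lambda>m::nat\<times>nat. Idm C (Dm C \<phi>)"
  note SF = S_facts[OF dc phi X x]
  have P1: "path C [] ?V1 ?M1"
    by (rule path_nil[OF cat]) (use pm dcat_facts(2,3)[OF dc] in auto)
  interpret t1: tpath C "[]" ?V1 ?M1 by (rule tpath.intro, rule catl.intro[OF cat], rule tpath_axioms.intro[OF P1])
  interpret t2: tpath C "[S]" ?Wo ?Wm by (rule tpath.intro, rule catl.intro[OF cat], rule tpath_axioms.intro[OF SF(1)])
  define W where "W = Dm C \<phi>"
  define a where "a = track_top C [] ?V1 ?M1"
  define b where "b = track_bot C [S] ?Wo ?Wm"
  have W: "W \<in> Ob C" unfolding W_def using pm by simp
  have ae: "a \<in> Elt (track C [] ?V1 ?M1) W" unfolding a_def W_def track_top_def t1.elt_G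
    using t1.idcar[of 0] by auto
  have be: "b \<in> Elt (track C [S] ?Wo ?Wm) W" unfolding b_def W_def track_bot_def t2.elt_G
    using t2.idcar[of 0] by auto
  interpret g: gctx C "track C [] ?V1 ?M1" "track C [S] ?Wo ?Wm" W a b
    by (rule gctx.intro, rule catl.intro[OF cat], rule gctx_axioms.intro[OF t1.presheaf_G t2.presheaf_G W ae be])
  have Pdef: "track_concat C [] ?V1 ?M1 [S] ?Wo ?Wm = glue C (track C [] ?V1 ?M1) (track C [S] ?Wo ?Wm) W a b"
    unfolding track_concat_def W_def a_def b_def by simp
  have jdef: "track_concat_j C [] ?V1 ?M1 [S] ?Wo ?Wm = (\<lambda>U x. g.gcls U (Inl x))"
    unfolding track_concat_j_def W_def a_def b_def by simp
  have x0: "Act X \<phi> x \<in> Elt X (Dm C \<phi>)" using psh_act[OF X pm x] .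
  have coh1: "t1.coherent X (\<lambda>i. Act X \<phi> x)"
    by (rule t1.coherent_adj[OF X]) (use x0 in auto)
  have cohy: "t1.coherent Y (\<lambda>i. y)"
    by (rule t1.coherent_adj[OF Y]) (use y in auto)
  define \<gamma> where "\<gamma> = t1.tmap Y (\<lambda>i. y)"
  have gm: "psh_map C (track C [] ?V1 ?M1) Y \<gamma>" unfolding \<gamma>_def by (rule t1.tmap_pm[OF Y cohy])
  define \<alpha>1 where "\<alpha>1 = t1.tmap X (\<lambda>i. Act X \<phi> x)"
  have a1m: "psh_map C (track C [] ?V1 ?M1) X \<alpha>1" unfolding \<alpha>1_def by (rule t1.tmap_pm[OF X coh1])
  define \<alpha>2 where "\<alpha>2 = t2.tmap X ?xx"
  have a2m: "psh_map C (track C [S] ?Wo ?Wm) X \<alpha>2" unfolding \<alpha>2_def by (rule t2.tmap_pm[OF X SF(2)])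
  have a1a: "\<alpha>1 W a = Act X \<phi> x"
    unfolding \<alpha>1_def a_def W_def track_top_def using t1.tmap_val[OF X coh1 t1.idcar[of 0]] psh_id[OF X _ x0] pm by simp
  have a2b: "\<alpha>2 W b = Act X \<phi> x"
    unfolding \<alpha>2_def b_def W_def track_bot_def using t2.tmap_val[OF X SF(2) t2.bot_car] psh_id[OF X _ x0] pm by simp
  have ab: "\<alpha>1 W a = \<alpha>2 W b" using a1a a2b by simp
  define \<alpha> where "\<alpha> = g.gmap \<alpha>1 \<alpha>2"
  have am: "psh_map C (track_concat C [] ?V1 ?M1 [S] ?Wo ?Wm) X \<alpha>"
    unfolding Pdef \<alpha>_def by (rule g.gmap_pm[OF X a1m a2m ab])
  have hj: "\<forall>U\<in>Ob C. \<forall>u\<in>Elt (track C [] ?V1 ?M1) U. \<alpha> U (track_concat_j C [] ?V1 ?M1 [S] ?Wo ?Wm U u) = f U (\<gamma> U u)"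
  proof (intro ballI)
    fix U u assume U: "U \<in> Ob C" and u: "u \<in> Elt (track C [] ?V1 ?M1) U"
    then obtain i \<psi> where uc: "u = t1.cls U (i,\<psi>)" and ip: "(i,\<psi>) \<in> t1.car U" unfolding t1.elt_G by auto
    have ps: "\<psi> \<in> Mor C" "Dm C \<psi> = U" "Cd C \<psi> = Dm C \<phi>" using ip t1.car_iff by auto
    have "\<alpha> U (track_concat_j C [] ?V1 ?M1 [S] ?Wo ?Wm U u) = \<alpha>1 U u"
      unfolding jdef \<alpha>_def using g.gmap_val[OF X a1m a2m ab, of "Inl u" U] u by simp
    also have "\<dots> = Act X \<psi> (Act X \<phi> x)" unfolding \<alpha>1_def uc using t1.tmap_val[OF X coh1 ip] .
    also have "\<dots> = Act X \<psi> (f (Dm C \<phi>) y)" using e by simp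
    also have "\<dots> = f U (Act Y \<psi> y)" using pm_nat[OF fm ps(1)] ps y by simp
    also have "\<dots> = f U (\<gamma> U u)" unfolding \<gamma>_def uc using t1.tmap_val[OF Y cohy ip] by simp
    finally show "\<alpha> U (track_concat_j C [] ?V1 ?M1 [S] ?Wo ?Wm U u) = f U (\<gamma> U u)" .
  qed
  have eqW: "?V1 (length []) = ?Wo 0" by simp
  obtain \<beta> where b: "psh_map C (track_concat C [] ?V1 ?M1 [S] ?Wo ?Wm) Y \<beta>"
    "\<forall>U\<in>Ob C. \<forall>u\<in>Elt (track C [] ?V1 ?M1) U. \<beta> U (track_concat_j C [] ?V1 ?M1 [S] ?Wo ?Wm U u) = \<gamma> U u"
    "\<forall>U\<in>Ob C. \<forall>z\<in>Elt (track_concat C [] ?V1 ?M1 [S] ?Wo ?Wm) U. f U (\<beta> U z) = \<alpha> U z"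
    using te[unfolded track_extension_def Let_def, rule_format, OF P1 SF(1) eqW gm am hj[rule_format]] by blast
  note bm = b(1)[unfolded Pdef]
  have c1: "(1, Idm C (Cd C \<phi>)) \<in> t2.car (Cd C \<phi>)" using pm by (simp add: t2.car_iff)
  define c where "c = t2.cls (Cd C \<phi>) (1, Idm C (Cd C \<phi>))"
  have ce: "c \<in> Elt (track C [S] ?Wo ?Wm) (Cd C \<phi>)" unfolding c_def using c1 t2.elt_G by auto
  define z where "z = g.gcls (Cd C \<phi>) (Inr c)"
  have zin: "Inr c \<in> g.gcar (Cd C \<phi>)" using ce by simp
  have ze: "z \<in> Elt (glue C (track C [] ?V1 ?M1) (track C [S] ?Wo ?Wm) W a b) (Cd C \<phi>)"
    unfolding z_def g.elt_GG using zin by blast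
  define y' where "y' = \<beta> (Cd C \<phi>) z"
  have y'e: "y' \<in> Elt Y (Cd C \<phi>)" unfolding y'_def using pm_elt[OF bm _ ze] pm by simp
  have fy': "f (Cd C \<phi>) y' = x"
  proof -
    have "f (Cd C \<phi>) y' = \<alpha> (Cd C \<phi>) z" unfolding y'_def using b(3) ze pm Pdef by simp
    also have "\<dots> = \<alpha>2 (Cd C \<phi>) c" unfolding \<alpha>_def z_def using g.gmap_val[OF X a1m a2m ab zin] by simp
    also have "\<dots> = x" unfolding \<alpha>2_def c_def using t2.tmap_val[OF X SF(2) c1] psh_id[OF X _ x] pm by simp
    finally show ?thesis .
  qed
  have actc: "Act (track C [S] ?Wo ?Wm) \<phi> c = b"
  proof -
    have "Act (track C [S] ?Wo ?Wm) \<phi> c = t2.cls (Dm C \<phi>) (1, Cmp C (Idm C (Cd C \<phi>)) \<phi>)"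
      unfolding c_def using t2.act_G_cls[OF pm] c1 by simp
    also have "\<dots> = t2.cls (Dm C \<phi>) (1, \<phi>)" using idl[OF pm] by simp
    also have "\<dots> = b" unfolding b_def track_bot_def using SF(3) by simp
    finally show ?thesis .
  qed
  have "Act Y \<phi> y' = \<beta> (Dm C \<phi>) (Act (glue C (track C [] ?V1 ?M1) (track C [S] ?Wo ?Wm) W a b) \<phi> z)"
    unfolding y'_def using pm_nat[OF bm pm ze] by simp
  also have "\<dots> = \<beta> W (g.gcls W (Inr b))"
    unfolding z_def using g.act_GG[OF pm zin] actc W_def by simp
  also have "\<dots> = \<beta> W (g.gcls W (Inl a))" using g.gident by simp
  also have "\<dots> = \<gamma> W a" using b(2) W ae jdef by simp
  also have "\<dots> = y" unfolding \<gamma>_def a_def W_def track_top_def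
    using t1.tmap_val[OF Y cohy t1.idcar[of 0]] psh_id[OF Y _ y] pm by simp
  finally show "\<exists>y'\<in>Elt Y (Cd C \<phi>). Act Y \<phi> y' = y \<and> f (Cd C \<phi>) y' = x" using y'e fy' by blast
qed


theorem lemma12:
  fixes C :: "('o, 'm) dcat" and Y :: "('o, 'm, 'y) psh" and X :: "('o, 'm, 'x) psh"
    and f :: "'o \<Rightarrow> 'y \<Rightarrow> 'x"
  assumes "dcategory C" and "presheaf C Y" and "presheaf C X" and "psh_map C Y X f"
  shows "(future_open C Y X f \<longleftrightarrow> path_lifting C Y X f) \<and>
         (future_open C Y X f \<longleftrightarrow> track_lifting C Y X f) \<and>
         (future_open C Y X f \<longleftrightarrow> track_extension C Y X f)"
  using FO_PL[OF assms] PL_FO[OF assms] FO_TL[OF assms] TL_FO[OF assms] FO_TE[OF assms] TE_FO[OF assms]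
  by blast

end
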